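(* Let $q\ge5$ be a prime power and let $\mathcal{C}_\mathscr{C}$ be the $[q+1,q-3,5]_q$ code with parity check matrix whose columns are the vectors $(1,t,t^2,t^3)$, $t\in\mathbb{F}_q$, and $(0,0,0,1)$. Let $\mathcal{V}^{(3)}$ be a weight-$3$ coset of $\mathcal{C}_\mathscr{C}$. Then $B_0(\mathcal{V}^{(3)})=B_1(\mathcal{V}^{(3)})=B_2(\mathcal{V}^{(3)})=0$, $$B_3(\mathcal{V}^{(3)})\in\begin{cases}\{\frac{q^2-3q+2}{6},\frac{q^2-q}{6}\}& q\equiv1\pmod3,\\ \{\frac{q^2-3q+2}{6},\frac{q^2-q-2}{6},\frac{q^2-q+4}{6}\}& q\equiv-1\pmod3,\\ \{\frac{q^2-3q}{6},\frac{q^2-q}{6}\}& q\equiv0\pmod3,\end{cases}$$ $$B_4(\mathcal{V}^{(3)})=\binom{q+1}{4}-(q-2)B_3(\mathcal{V}^{(3)}),$$ and for $w\ge5$ $$B_w(\mathcal{V}^{(3)})=A_w(\mathcal{C}_\mathscr{C})+(-1)^{w}\left(\binom{q+1}{w}\binom{w-1}{3}-\binom{q-2}{w-3}B_3(\mathcal{V}^{(3)})\right).$$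
   Context: A coset of a linear code $\mathcal{C}\subseteq\mathbb{F}_q^n$ is a set $\mathbf{v}+\mathcal{C}$; its weight is the minimum Hamming weight of its vectors. $B_w(\mathcal{V})$ is the number of vectors of Hamming weight $w$ in the coset $\mathcal{V}$, and $A_w(\mathcal{C}_\mathscr{C})$ is the number of codewords of Hamming weight $w$ in $\mathcal{C}_\mathscr{C}$. *)

theory Defs
  imports Main
begin

text \<open>Coordinates of F_q^(q+1) are indexed by 'a option: Some t is the column
(1,t,t^2,t^3), None is the column (0,0,0,1) of the parity check matrix.\<close>

definition pc_entry :: "nat \<Rightarrow> 'a::field option \<Rightarrow> 'a" where
  "pc_entry i p = (case p of Some t \<Rightarrow> t ^ i | None \<Rightarrow> (if i = 3 then 1 else 0))"

definition arc_code :: "('a::{field,finite} option \<Rightarrow> 'a) set" where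
  "arc_code = {c. \<forall>i<4. (\<Sum>p\<in>UNIV. pc_entry i p * c p) = 0}"

definition hweight :: "('b \<Rightarrow> 'a::zero) \<Rightarrow> nat" where
  "hweight x = card {p. x p \<noteq> 0}"

definition coset_of :: "('a::{field,finite} option \<Rightarrow> 'a) \<Rightarrow> ('a option \<Rightarrow> 'a) set" where
  "coset_of v = {(\<lambda>p. v p + c p) | c. c \<in> arc_code}"

definition coset_weight :: "('b \<Rightarrow> 'a::zero) set \<Rightarrow> nat" where
  "coset_weight V = Min (hweight ` V)"

definition B_count :: "nat \<Rightarrow> ('b \<Rightarrow> 'a::zero) set \<Rightarrow> nat" where
  "B_count w V = card {x\<in>V. hweight x = w}"

definition A_count :: "nat \<Rightarrow> ('b \<Rightarrow> 'a::zero) set \<Rightarrow> nat" where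
  "A_count w C = card {c\<in>C. hweight c = w}"

end

theory Submission
  imports Defs "HOL-Computational_Algebra.Polynomial" "HOL-Library.Cardinality"
begin

definition syn :: "('a::{field,finite} option \<Rightarrow> 'a) \<Rightarrow> nat \<Rightarrow> 'a" where
  "syn w i = (\<Sum>p\<in>UNIV. pc_entry i p * w p)"

definition col :: "'a::field option \<Rightarrow> nat \<Rightarrow> 'a" where
  "col p i = pc_entry i p"

definition supp :: "('b \<Rightarrow> 'a::zero) \<Rightarrow> 'b set" where
  "supp w = {p. w p \<noteq> 0}"

definition Lf :: "'a::field poly \<Rightarrow> (nat \<Rightarrow> 'a) \<Rightarrow> 'a" where
  "Lf h y = coeff h 0 * y 0 + coeff h 1 * y 1 + coeff h 2 * y 2 + coeff h 3 * y 3"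

definition pf :: "'a::field option \<Rightarrow> 'a poly" where
  "pf x = (case x of Some a \<Rightarrow> [:-a, 1:] | None \<Rightarrow> 1)"

definition hpol :: "'a::field option \<Rightarrow> 'a option \<Rightarrow> 'a option \<Rightarrow> 'a poly" where
  "hpol x y z = pf x * pf y * pf z"

lemma hweight_supp: "hweight w = card (supp w)"
  by (simp add: hweight_def supp_def)

lemma coset_eq: "coset_of v = {x. \<forall>i<4. syn x i = syn v i}"
proof -
  have "x \<in> coset_of v \<longleftrightarrow> (\<forall>i<4. syn x i = syn v i)" for x
  proof -
    have "x \<in> coset_of v \<longleftrightarrow> (\<lambda>p. x p - v p) \<in> arc_code"
      unfolding coset_of_def by (auto intro!: exI[of _ "\<lambda>p. x p - v p"])
    also have "\<dots> \<longleftrightarrow> (\<forall>i<4. syn x i = syn v i)"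
      unfolding arc_code_def syn_def by (simp add: right_diff_distrib sum_subtractf)
    finally show ?thesis .
  qed
  then show ?thesis by auto
qed

lemma arc_eq: "arc_code = {x. \<forall>i<4. syn x i = 0}"
  unfolding arc_code_def syn_def by simp

lemma syn_diff: "syn (\<lambda>p. a p - b p) i = syn a i - syn b i"
  unfolding syn_def by (simp add: right_diff_distrib sum_subtractf)

lemma Lf_syn: "Lf h (syn w) = (\<Sum>p\<in>UNIV. w p * Lf h (col p))"
  unfolding Lf_def syn_def col_def
  by (simp add: sum_distrib_left sum.distrib algebra_simps)

lemma Lf_Some: "Lf (hpol x y z) (col (Some t)) = poly (pf x) t * poly (pf y) t * poly (pf z) t"
  unfolding Lf_def col_def pc_entry_def hpol_def pf_def
  by (cases x; cases y; cases z) (simp_all add: algebra_simps power2_eq_square power3_eq_cube eval_nat_numeral)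

lemma Lf_None: "Lf (hpol x y z) (col None) = (if None \<in> {x,y,z} then 0 else 1)"
  unfolding Lf_def col_def pc_entry_def hpol_def pf_def
  by (cases x; cases y; cases z) (simp_all add: algebra_simps eval_nat_numeral)

lemma poly_pf: "poly (pf x) t = 0 \<longleftrightarrow> x = Some t"
  unfolding pf_def by (cases x) auto

lemma Lf_col_zero: "p \<in> {x,y,z} \<Longrightarrow> Lf (hpol x y z) (col p) = 0"
  by (cases p) (auto simp: Lf_Some Lf_None poly_pf)

lemma Lf_col_nz: "p \<notin> {x,y,z} \<Longrightarrow> Lf (hpol x y z) (col p) \<noteq> 0"
  by (cases p) (auto simp: Lf_Some Lf_None poly_pf)


lemma Lf_zero_vec: "(\<forall>i<4. y i = 0) \<Longrightarrow> Lf h y = 0"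
  unfolding Lf_def by simp

lemma Lf_one_term:
  assumes "p \<notin> {x,y,z}" "supp w \<subseteq> insert p {x,y,z}"
  shows "Lf (hpol x y z) (syn w) = w p * Lf (hpol x y z) (col p)"
proof -
  have "(\<Sum>p'\<in>UNIV. w p' * Lf (hpol x y z) (col p')) =
        (\<Sum>p'\<in>UNIV. if p' = p then w p * Lf (hpol x y z) (col p) else 0)"
  proof (rule sum.cong[OF refl])
    fix p' assume "p' \<in> (UNIV :: 'a option set)"
    show "w p' * Lf (hpol x y z) (col p') = (if p' = p then w p * Lf (hpol x y z) (col p) else 0)"
    proof (cases "p' = p")
      case False
      show ?thesis
      proof (cases "p' \<in> {x,y,z}")
        case True then show ?thesis using False by (simp add: Lf_col_zero)
      next
        case f2: False then have "w p' = 0" using assms(2) False by (auto simp: supp_def)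
        then show ?thesis using False by simp
      qed
    qed simp
  qed
  then show ?thesis by (simp add: Lf_syn)
qed

lemma zero_at:
  assumes "p \<notin> {x,y,z}" "supp w \<subseteq> insert p {x,y,z}" "\<forall>i<4. syn w i = 0"
  shows "w p = 0"
proof -
  have "Lf (hpol x y z) (syn w) = 0" using assms(3) by (rule Lf_zero_vec)
  then have "w p * Lf (hpol x y z) (col p) = 0" using Lf_one_term[OF assms(1,2)] by simp
  then show ?thesis using Lf_col_nz[OF assms(1)] by simp
qed

lemma K4:
  assumes "distinct [x,y,z,u]" "supp w \<subseteq> {x,y,z,u}" "\<forall>i<4. syn w i = 0"
  shows "w = (\<lambda>_. 0)"
proof
  fix p
  show "w p = 0"
  proof (cases "p \<in> {x,y,z,u}")
    case False then show ?thesis using assms(2) by (auto simp: supp_def)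
  next
    case True
    then consider "p = x" | "p = y" | "p = z" | "p = u" by auto
    then show ?thesis
    proof cases
      case 1 then show ?thesis using assms by (intro zero_at[of p y z u]) auto
    next
      case 2 then show ?thesis using assms by (intro zero_at[of p x z u]) auto
    next
      case 3 then show ?thesis using assms by (intro zero_at[of p x y u]) auto
    next
      case 4 then show ?thesis using assms by (intro zero_at[of p x y z]) auto
    qed
  qed
qed

lemma card4_obtain:
  assumes "card B = 4"
  shows "\<exists>x y z u. B = {x,y,z,u} \<and> distinct [x,y,z,u]"
proof -
  from assms have "card B = Suc 3" by simp
  from card_Suc_eq[THEN iffD1, OF this] obtain x B' where B: "B = insert x B'" "x \<notin> B'" "card B' = 3"
    by blast
  obtain y z u where yzu: "B' = {y,z,u}" "y \<noteq> z" "z \<noteq> u" "y \<noteq> u"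
    using B(3) unfolding card_3_iff by blast
  have "B = {x,y,z,u}" using B(1) yzu(1) by simp
  moreover have "distinct [x,y,z,u]" using B(2) yzu by auto
  ultimately show ?thesis by blast
qed

lemma card_opt: "card (UNIV :: 'a::finite option set) = card (UNIV :: 'a set) + 1"
  by simp

lemma extend4:
  assumes "card (UNIV :: 'a::finite set) \<ge> 3" "card (S :: 'a option set) \<le> 4"
  shows "\<exists>x y z u. S \<subseteq> {x,y,z,u} \<and> distinct [x,y,z,u]"
proof -
  have "4 \<le> card (UNIV :: 'a option set)" using assms(1) by simp
  then obtain B where "S \<subseteq> B" "card B = 4"
    using exists_subset_between[of S 4 UNIV] assms(2) by auto
  then show ?thesis using card4_obtain by blast
qed

lemma Kle4:
  assumes "card (UNIV :: 'a::{field,finite} set) \<ge> 3" "card (S :: 'a option set) \<le> 4"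
    "supp w \<subseteq> S" "\<forall>i<4. syn w i = 0"
  shows "w = (\<lambda>_. 0)"
proof -
  obtain x y z u where "S \<subseteq> {x,y,z,u}" "distinct [x,y,z,u]" using extend4[OF assms(1,2)] by blast
  then show ?thesis using K4[of x y z u w] assms(3,4) by auto
qed

lemma less4: "(i::nat) < 4 \<longleftrightarrow> i = 0 \<or> i = 1 \<or> i = 2 \<or> i = 3"
  by auto

lemma Surj4:
  assumes "distinct [x,y,z,u]"
  shows "\<exists>w::'a::{field,finite} option \<Rightarrow> 'a. supp w \<subseteq> {x,y,z,u} \<and> (\<forall>i<4. syn w i = s i)"
proof -
  define E where "E = (\<lambda>(a::'a,b::'a,c::'a,d::'a). (\<lambda>p. if p = x then a else if p = y then b
      else if p = z then c else if p = u then d else 0))"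
  define \<Phi> where "\<Phi> = (\<lambda>t. (syn (E t) 0, syn (E t) 1, syn (E t) 2, syn (E t) 3))"
  have suppE: "supp (E t) \<subseteq> {x,y,z,u}" for t
    unfolding E_def supp_def by (cases t) auto
  have "inj \<Phi>"
  proof
    fix t1 t2 assume eq: "\<Phi> t1 = \<Phi> t2"
    let ?d = "\<lambda>p. E t1 p - E t2 p"
    have "\<forall>i<4. syn ?d i = 0" using eq unfolding \<Phi>_def less4 by (auto simp: syn_diff)
    moreover have "supp ?d \<subseteq> supp (E t1) \<union> supp (E t2)" by (auto simp: supp_def)
    then have "supp ?d \<subseteq> {x,y,z,u}" using suppE[of t1] suppE[of t2] by blast
    ultimately have "?d = (\<lambda>_. 0)" using K4[OF assms] by blast
    then have "\<And>p. E t1 p = E t2 p" by (metis eq_iff_diff_eq_0)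
    from this[of x] this[of y] this[of z] this[of u] assms show "t1 = t2"
      unfolding E_def by (cases t1; cases t2) auto
  qed
  then have "surj \<Phi>" by (simp add: finite_UNIV_inj_surj)
  then obtain t where "\<Phi> t = (s 0, s 1, s 2, s 3)" by (metis surjD)
  then have "\<forall>i<4. syn (E t) i = s i" unfolding \<Phi>_def less4 by auto
  then show ?thesis using suppE by blast
qed

lemma syn_two:
  "syn (\<lambda>p. (if p = x then \<alpha> else 0) + (if p = y then \<beta> else 0)) i = \<alpha> * pc_entry i x + \<beta> * pc_entry i y"
  unfolding syn_def by (simp add: distrib_left sum.distrib if_distrib[where f="\<lambda>a. _ * a"] cong: if_cong)


lemma card_fibers:
  assumes "finite S" "finite T" "g ` S \<subseteq> T"
  shows "card S = (\<Sum>y\<in>T. card {x\<in>S. g x = y})"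
  using sum.group[OF assms, of "\<lambda>_. 1::nat"] by (simp add: card_eq_sum[symmetric])

lemma count3:
  fixes X :: "'b set" and R :: "'b \<Rightarrow> 'b \<Rightarrow> 'b \<Rightarrow> bool"
  assumes fin: "finite X"
    and sym1: "\<And>x y z. R x y z \<Longrightarrow> R y x z" and sym2: "\<And>x y z. R x y z \<Longrightarrow> R x z y"
    and fn: "\<And>x y. x \<in> X \<Longrightarrow> y \<in> X \<Longrightarrow> \<exists>!z. z \<in> X \<and> R x y z"
  shows "6 * card {T. T \<subseteq> X \<and> card T = 3 \<and> (\<exists>x y z. T = {x,y,z} \<and> R x y z)} + 3 * card X
         = card X * card X + 2 * card {x\<in>X. R x x x}"
proof -
  define All where "All = {t. fst t \<in> X \<and> fst (snd t) \<in> X \<and> snd (snd t) \<in> X \<and> R (fst t) (fst (snd t)) (snd (snd t))}"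
  define N1 where "N1 = {t\<in>All. fst t = fst (snd t)}"
  define N2 where "N2 = {t\<in>All. fst (snd t) = snd (snd t)}"
  define N3 where "N3 = {t\<in>All. fst t = snd (snd t)}"
  define D where "D = {t\<in>All. fst t = fst (snd t) \<and> fst (snd t) = snd (snd t)}"
  define OD where "OD = All - (N1 \<union> N2 \<union> N3)"
  define Good where "Good = {T. T \<subseteq> X \<and> card T = 3 \<and> (\<exists>x y z. T = {x,y,z} \<and> R x y z)}"
  have finAll: "finite All"
    by (rule finite_subset[of _ "X \<times> X \<times> X"]) (auto simp: All_def fin)
  have uniq: "z = z'" if "x \<in> X" "y \<in> X" "z \<in> X" "z' \<in> X" "R x y z" "R x y z'" for x y z z'
    using fn[OF that(1,2)] that by blast
  have "card All = card (X \<times> X)"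
  proof -
    have "inj_on (\<lambda>t. (fst t, fst (snd t))) All"
      by (rule inj_onI) (auto simp: All_def intro: uniq prod_eqI)
    moreover have "(\<lambda>t. (fst t, fst (snd t))) ` All = X \<times> X"
    proof
      show "(\<lambda>t. (fst t, fst (snd t))) ` All \<subseteq> X \<times> X" by (auto simp: All_def)
      show "X \<times> X \<subseteq> (\<lambda>t. (fst t, fst (snd t))) ` All"
      proof
        fix p assume "p \<in> X \<times> X"
        then obtain x y where p: "p = (x,y)" "x \<in> X" "y \<in> X" by auto
        then obtain z where "z \<in> X" "R x y z" using fn by blast
        then have "(x,y,z) \<in> All" using p by (simp add: All_def)
        then show "p \<in> (\<lambda>t. (fst t, fst (snd t))) ` All" using p by force
      qed
    qed
    ultimately show ?thesis using card_image by fastforce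
  qed
  then have cAll: "card All = card X * card X" by (simp add: card_cartesian_product)
  have cN1: "card N1 = card X"
  proof -
    have "inj_on fst N1" by (rule inj_onI) (auto simp: N1_def All_def intro: uniq prod_eqI)
    moreover have "fst ` N1 = X"
    proof
      show "fst ` N1 \<subseteq> X" by (auto simp: N1_def All_def)
      show "X \<subseteq> fst ` N1"
      proof
        fix x assume "x \<in> X"
        then obtain z where "z \<in> X" "R x x z" using fn by blast
        then have "(x,x,z) \<in> N1" using \<open>x \<in> X\<close> by (simp add: N1_def All_def)
        then show "x \<in> fst ` N1" by force
      qed
    qed
    ultimately show ?thesis using card_image by fastforce
  qed
  have cN2: "card N2 = card X"
  proof -
    have "inj_on (\<lambda>t. fst (snd t)) N2"
    proof (rule inj_onI)
      fix a b assume "a \<in> N2" "b \<in> N2" "fst (snd a) = fst (snd b)"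
      then show "a = b" unfolding N2_def All_def
        by (cases a; cases b) (auto intro: uniq sym1 sym2)
    qed
    moreover have "(\<lambda>t. fst (snd t)) ` N2 = X"
    proof
      show "(\<lambda>t. fst (snd t)) ` N2 \<subseteq> X" by (auto simp: N2_def All_def)
      show "X \<subseteq> (\<lambda>t. fst (snd t)) ` N2"
      proof
        fix y assume "y \<in> X"
        then obtain x where "x \<in> X" "R y y x" using fn by blast
        then have "R x y y" by (blast intro: sym1 sym2)
        then have "(x,y,y) \<in> N2" using \<open>x \<in> X\<close> \<open>y \<in> X\<close> by (simp add: N2_def All_def)
        then show "y \<in> (\<lambda>t. fst (snd t)) ` N2" by force
      qed
    qed
    ultimately show ?thesis using card_image by fastforce
  qed
  have cN3: "card N3 = card X"
  proof -
    have "inj_on fst N3"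
    proof (rule inj_onI)
      fix a b assume "a \<in> N3" "b \<in> N3" "fst a = fst b"
      then show "a = b" unfolding N3_def All_def
        by (cases a; cases b) (auto intro: uniq sym1 sym2)
    qed
    moreover have "fst ` N3 = X"
    proof
      show "fst ` N3 \<subseteq> X" by (auto simp: N3_def All_def)
      show "X \<subseteq> fst ` N3"
      proof
        fix x assume "x \<in> X"
        then obtain y where "y \<in> X" "R x x y" using fn by blast
        then have "R x y x" by (blast intro: sym2)
        then have "(x,y,x) \<in> N3" using \<open>x \<in> X\<close> \<open>y \<in> X\<close> by (simp add: N3_def All_def)
        then show "x \<in> fst ` N3" by force
      qed
    qed
    ultimately show ?thesis using card_image by fastforce
  qed
  have cD: "card D = card {x\<in>X. R x x x}"
  proof -
    have "inj_on fst D" by (rule inj_onI) (auto simp: D_def All_def intro: prod_eqI)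
    moreover have "fst ` D = {x\<in>X. R x x x}"
    proof
      show "fst ` D \<subseteq> {x\<in>X. R x x x}" by (auto simp: D_def All_def)
      show "{x\<in>X. R x x x} \<subseteq> fst ` D"
      proof
        fix x assume "x \<in> {x\<in>X. R x x x}"
        then have "(x,x,x) \<in> D" by (simp add: D_def All_def)
        then show "x \<in> fst ` D" by force
      qed
    qed
    ultimately show ?thesis using card_image by fastforce
  qed
  have fN: "finite N1" "finite N2" "finite N3" "finite D"
    using finAll by (auto simp: N1_def N2_def N3_def D_def)
  have i12: "N1 \<inter> N2 = D" by (auto simp: N1_def N2_def D_def)
  have i123: "(N1 \<union> N2) \<inter> N3 = D" by (auto simp: N1_def N2_def N3_def D_def)
  have u12: "card (N1 \<union> N2) + card D = 2 * card X"
    using card_Un_Int[OF fN(1,2)] i12 cN1 cN2 by simp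
  have u123: "card (N1 \<union> N2 \<union> N3) + card D = card (N1 \<union> N2) + card X"
    using card_Un_Int[of "N1 \<union> N2" N3] fN i123 cN3 by simp
  have sub: "N1 \<union> N2 \<union> N3 \<subseteq> All" by (auto simp: N1_def N2_def N3_def)
  have cOD: "card OD + card (N1 \<union> N2 \<union> N3) = card All"
    unfolding OD_def using card_Diff_subset[OF _ sub] finAll fN sub
    by (metis card_mono le_add_diff_inverse2 finite_UnI)
  define set3 where "set3 = (\<lambda>t::'b\<times>'b\<times>'b. {fst t, fst (snd t), snd (snd t)})"
  have finGood: "finite Good" by (rule finite_subset[of _ "Pow X"]) (auto simp: Good_def fin)
  have ODimg: "set3 ` OD \<subseteq> Good"
  proof
    fix T assume "T \<in> set3 ` OD"
    then obtain x y z where t: "(x,y,z) \<in> OD" "T = {x,y,z}" by (auto simp: set3_def)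
    then show "T \<in> Good" by (auto simp: OD_def All_def N1_def N2_def N3_def Good_def)
  qed
  have fib: "card {t\<in>OD. set3 t = T} = 6" if G: "T \<in> Good" for T
  proof -
    obtain x y z where T: "T = {x,y,z}" "R x y z" "T \<subseteq> X" "card T = 3"
      using G unfolding Good_def by blast
    have d: "x \<noteq> y" "y \<noteq> z" "x \<noteq> z" using T(4) unfolding T(1)
      by (auto simp: card_insert_if split: if_splits)
    have Rs: "R x y z" "R x z y" "R y x z" "R y z x" "R z x y" "R z y x"
      using T(2) by (blast intro: sym1 sym2)+
    have "{t\<in>OD. set3 t = T} = {(x,y,z),(x,z,y),(y,x,z),(y,z,x),(z,x,y),(z,y,x)}"
    proof
      show "{t\<in>OD. set3 t = T} \<subseteq> {(x,y,z),(x,z,y),(y,x,z),(y,z,x),(z,x,y),(z,y,x)}"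
      proof
        fix t assume "t \<in> {t\<in>OD. set3 t = T}"
        then obtain a b c where t: "t = (a,b,c)" "a \<noteq> b" "b \<noteq> c" "a \<noteq> c" "{a,b,c} = {x,y,z}"
          by (cases t) (auto simp: OD_def N1_def N2_def N3_def All_def set3_def T(1))
        then have "a \<in> {x,y,z}" "b \<in> {x,y,z}" "c \<in> {x,y,z}" by blast+
        then show "t \<in> {(x,y,z),(x,z,y),(y,x,z),(y,z,x),(z,x,y),(z,y,x)}"
          using t(1-4) d by auto
      qed
      show "{(x,y,z),(x,z,y),(y,x,z),(y,z,x),(z,x,y),(z,y,x)} \<subseteq> {t\<in>OD. set3 t = T}"
        using T(3) Rs d by (auto simp: OD_def N1_def N2_def N3_def All_def set3_def T(1))
    qed
    then show ?thesis using d by simp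
  qed
  have "card OD = (\<Sum>T\<in>Good. card {t\<in>OD. set3 t = T})"
    using card_fibers[OF _ finGood ODimg] finAll by (simp add: OD_def)
  also have "\<dots> = 6 * card Good" using fib by simp
  finally have "card OD = 6 * card Good" .
  then show ?thesis using cOD u12 u123 cAll cD unfolding Good_def[symmetric] by linarith
qed


lemma Lf_cong: "(\<forall>i<4. y i = y' i) \<Longrightarrow> Lf h y = Lf h y'"
  unfolding Lf_def by simp

lemma pc_Some: "pc_entry i (Some a) = a ^ i" by (simp add: pc_entry_def)
lemma pc_None: "pc_entry i None = (if i = 3 then 1 else 0)" by (simp add: pc_entry_def)

locale cw3 =
  fixes v :: "'a::{field,finite} option \<Rightarrow> 'a"
  assumes q5: "5 \<le> card (UNIV::'a set)"
    and cw: "coset_weight (coset_of v) = 3"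
begin

abbreviation "s \<equiv> syn v"
abbreviation "V \<equiv> coset_of v"

lemma mem_V: "x \<in> V \<longleftrightarrow> (\<forall>i<4. syn x i = s i)"
  using coset_eq[of v] by auto

lemma finV: "finite V" by simp

lemma v_in: "v \<in> V" by (simp add: mem_V)

lemma wge3: "x \<in> V \<Longrightarrow> 3 \<le> hweight x"
  using cw unfolding coset_weight_def by (metis Min_le finV finite_imageI imageI)

lemma ex3: "\<exists>x\<in>V. hweight x = 3"
proof -
  have "Min (hweight ` V) \<in> hweight ` V" using v_in by (intro Min_in) auto
  then show ?thesis using cw unfolding coset_weight_def by auto
qed

lemma no_small:
  assumes "\<forall>i<4. s i = \<alpha> * pc_entry i x + \<beta> * pc_entry i y"
  shows False
proof -
  define w where "w = (\<lambda>p. (if p = x then \<alpha> else 0) + (if p = y then \<beta> else 0))"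
  have wV: "w \<in> V" unfolding mem_V w_def syn_two using assms by simp
  have "supp w \<subseteq> {x,y}" by (auto simp: w_def supp_def)
  moreover have "card {x,y} \<le> 2" by (cases "x = y") auto
  ultimately have "hweight w \<le> 2" unfolding hweight_supp
    using card_mono[of "{x,y}" "supp w"] by simp
  then show False using wge3[OF wV] by simp
qed

lemma q3: "3 \<le> card (UNIV::'a set)" using q5 by simp

lemma criterion:
  assumes "distinct [x,y,z]"
  shows "(\<exists>w\<in>V. supp w \<subseteq> {x,y,z}) \<longleftrightarrow> Lf (hpol x y z) s = 0"
proof
  assume "\<exists>w\<in>V. supp w \<subseteq> {x,y,z}"
  then obtain w where w: "w \<in> V" "supp w \<subseteq> {x,y,z}" by blast
  have "Lf (hpol x y z) s = Lf (hpol x y z) (syn w)" using w(1) by (intro Lf_cong) (simp add: mem_V)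
  also have "\<dots> = (\<Sum>p\<in>UNIV. w p * Lf (hpol x y z) (col p))" by (rule Lf_syn)
  also have "\<dots> = 0"
  proof (rule sum.neutral, intro ballI)
    fix p show "w p * Lf (hpol x y z) (col p) = 0"
      using w(2) Lf_col_zero[of p x y z] by (cases "p \<in> {x,y,z}") (auto simp: supp_def)
  qed
  finally show "Lf (hpol x y z) s = 0" .
next
  assume L: "Lf (hpol x y z) s = 0"
  have "card {x,y,z} \<le> 3" by (auto simp: card_insert_if)
  then have "card {x,y,z} < card (UNIV :: 'a option set)" using q5 by simp
  then have "{x,y,z} \<noteq> UNIV" by auto
  then obtain u where u: "u \<notin> {x,y,z}" by blast
  then have "distinct [x,y,z,u]" using assms by auto
  then obtain w where w: "supp w \<subseteq> {x,y,z,u}" "\<forall>i<4. syn w i = s i" using Surj4 by blast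
  have "Lf (hpol x y z) (syn w) = 0" using L w(2) Lf_cong[of "syn w" s] by simp
  moreover have "Lf (hpol x y z) (syn w) = w u * Lf (hpol x y z) (col u)"
    using w(1) u by (intro Lf_one_term) auto
  ultimately have "w u = 0" using Lf_col_nz[OF u] by simp
  then have "supp w \<subseteq> {x,y,z}" using w(1) by (auto simp: supp_def)
  moreover have "w \<in> V" using w(2) by (simp add: mem_V)
  ultimately show "\<exists>w\<in>V. supp w \<subseteq> {x,y,z}" by blast
qed

definition "Sup3 = {T. card T = 3 \<and> (\<exists>w\<in>V. supp w \<subseteq> T)}"

lemma uniq_supp:
  assumes "w1 \<in> V" "w2 \<in> V" "supp w1 \<subseteq> T" "supp w2 \<subseteq> T" "card T \<le> 4"
  shows "w1 = w2"
proof -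
  let ?d = "\<lambda>p. w1 p - w2 p"
  have "supp ?d \<subseteq> supp w1 \<union> supp w2" by (auto simp: supp_def)
  then have "supp ?d \<subseteq> T" using assms(3,4) by blast
  moreover have "\<forall>i<4. syn ?d i = 0" using assms(1,2) by (simp add: syn_diff mem_V)
  ultimately have "?d = (\<lambda>_. 0)" using Kle4[OF q3 assms(5)] by blast
  then show ?thesis by (metis eq_iff_diff_eq_0 ext)
qed

lemma B3_Sup3: "B_count 3 V = card Sup3"
proof -
  have "inj_on supp {x\<in>V. hweight x = 3}"
    by (rule inj_onI) (auto intro: uniq_supp simp: hweight_supp)
  moreover have "supp ` {x\<in>V. hweight x = 3} = Sup3"
  proof
    show "supp ` {x\<in>V. hweight x = 3} \<subseteq> Sup3" by (auto simp: Sup3_def hweight_supp)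
    show "Sup3 \<subseteq> supp ` {x\<in>V. hweight x = 3}"
    proof
      fix T assume "T \<in> Sup3"
      then obtain w where w: "w \<in> V" "supp w \<subseteq> T" "card T = 3" by (auto simp: Sup3_def)
      have "3 \<le> card (supp w)" using wge3[OF w(1)] by (simp add: hweight_supp)
      then have "supp w = T" using w(2,3) by (metis card_seteq finite)
      then show "T \<in> supp ` {x\<in>V. hweight x = 3}" using w by (auto simp: hweight_supp)
    qed
  qed
  ultimately show ?thesis unfolding B_count_def by (metis card_image)
qed

lemma Sup3_eq:
  assumes crit: "\<And>x y z. distinct [x,y,z] \<Longrightarrow> (Lf (hpol x y z) s = 0 \<longleftrightarrow> x \<in> X \<and> y \<in> X \<and> z \<in> X \<and> R x y z)"
  shows "Sup3 = {T. T \<subseteq> X \<and> card T = 3 \<and> (\<exists>x y z. T = {x,y,z} \<and> R x y z)}"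
proof (intro set_eqI iffI)
  fix T assume "T \<in> Sup3"
  then have T: "card T = 3" "\<exists>w\<in>V. supp w \<subseteq> T" by (auto simp: Sup3_def)
  then obtain x y z where xyz: "T = {x,y,z}" "x \<noteq> y" "y \<noteq> z" "x \<noteq> z" unfolding card_3_iff by blast
  then have "distinct [x,y,z]" by simp
  then have "x \<in> X \<and> y \<in> X \<and> z \<in> X \<and> R x y z" using crit criterion T(2) xyz(1) by blast
  then show "T \<in> {T. T \<subseteq> X \<and> card T = 3 \<and> (\<exists>x y z. T = {x,y,z} \<and> R x y z)}" using xyz T by auto
next
  fix T assume "T \<in> {T. T \<subseteq> X \<and> card T = 3 \<and> (\<exists>x y z. T = {x,y,z} \<and> R x y z)}"
  then obtain x y z where T: "T \<subseteq> X" "card T = 3" "T = {x,y,z}" "R x y z" by blast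
  have d: "distinct [x,y,z]" using T(2) unfolding T(3) by (auto simp: card_insert_if split: if_splits)
  then have "Lf (hpol x y z) s = 0" using crit T by auto
  then show "T \<in> Sup3" using criterion[OF d] T(2,3) by (auto simp: Sup3_def)
qed

end

lemma syn_add: "syn (\<lambda>p. a p + b p) i = syn a i + syn b i"
  unfolding syn_def by (simp add: distrib_left sum.distrib)

lemma sum_Pow_card:
  assumes "finite S"
  shows "(\<Sum>T\<in>Pow S. f (card T)) = (\<Sum>k\<le>card S. of_nat (card S choose k) * (f k :: int))"
proof -
  have "(\<Sum>T\<in>Pow S. f (card T)) = (\<Sum>k\<le>card S. \<Sum>T\<in>{T\<in>Pow S. card T = k}. f (card T))"
    using assms by (intro sum.group[symmetric]) (auto intro: card_mono)
  also have "\<dots> = (\<Sum>k\<le>card S. of_nat (card S choose k) * f k)"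
  proof (rule sum.cong[OF refl])
    fix k
    have "(\<Sum>T\<in>{T\<in>Pow S. card T = k}. f (card T)) = (\<Sum>T\<in>{T\<in>Pow S. card T = k}. f k)"
      by (rule sum.cong) auto
    also have "\<dots> = of_nat (card {T. T \<subseteq> S \<and> card T = k}) * f k" by simp
    also have "\<dots> = of_nat (card S choose k) * f k" using n_subsets[OF assms] by simp
    finally show "(\<Sum>T\<in>{T\<in>Pow S. card T = k}. f (card T)) = of_nat (card S choose k) * f k" .
  qed
  finally show ?thesis .
qed

lemma alt3:
  assumes "finite S" "card S = w" "4 \<le> w"
  shows "(\<Sum>T\<in>Pow S. (-1::int) ^ (w - card T) * of_bool (card T \<le> 3)) = - ((-1) ^ w * of_nat ((w - 1) choose 3))"
proof -
  have "(\<Sum>T\<in>Pow S. (-1::int) ^ (w - card T) * of_bool (card T \<le> 3))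
      = (\<Sum>k\<le>w. of_nat (w choose k) * ((-1) ^ (w - k) * of_bool (k \<le> 3)))"
    using sum_Pow_card[OF assms(1), of "\<lambda>k. (-1::int) ^ (w - k) * of_bool (k \<le> 3)"] assms(2) by simp
  also have "\<dots> = (\<Sum>k\<in>{0,1,2,3}. of_nat (w choose k) * ((-1) ^ (w - k) * of_bool (k \<le> 3)))"
    using assms(3) by (intro sum.mono_neutral_right) auto
  also have "\<dots> = - ((-1) ^ w * of_nat ((w - 1) choose 3))"
  proof -
    obtain m where m: "w = m + 4" using assms(3) by (intro that[of "w - 4"]) simp
    have e: "w - 1 = Suc (Suc (Suc m))" "w = Suc (Suc (Suc (Suc m)))" "w - 2 = Suc (Suc m)" "w - 3 = Suc m"
      using m by auto
    show ?thesis unfolding e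
      by (simp add: algebra_simps numeral_eq_Suc)
  qed
  finally show ?thesis .
qed

context cw3 begin

abbreviation C0 where "C0 \<equiv> (arc_code :: ('a option \<Rightarrow> 'a) set)"

definition NN :: "('a option \<Rightarrow> 'a) set \<Rightarrow> 'a option set \<Rightarrow> nat" where
  "NN X T = card {x\<in>X. supp x \<subseteq> T}"
definition EE :: "('a option \<Rightarrow> 'a) set \<Rightarrow> 'a option set \<Rightarrow> nat" where
  "EE X S = card {x\<in>X. supp x = S}"

lemma NN_sum: "int (NN X T) = (\<Sum>U\<in>Pow T. int (EE X U))"
proof -
  have "NN X T = (\<Sum>U\<in>Pow T. card {x\<in>{x\<in>X. supp x \<subseteq> T}. supp x = U})"
    unfolding NN_def by (rule card_fibers) auto
  also have "\<dots> = (\<Sum>U\<in>Pow T. EE X U)" unfolding EE_def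
    by (rule sum.cong[OF refl]) (auto intro: arg_cong[where f=card])
  finally show ?thesis by simp
qed

lemma EE_mob: "int (EE X S) = (\<Sum>T\<in>Pow S. (-1) ^ (card S - card T) * int (NN X T))"
  by (rule inclusion_exclusion_mobius[where g = "\<lambda>T. int (NN X T)" and f = "\<lambda>U. int (EE X U)"])
     (simp_all add: NN_sum)

lemma B_EE: "int (B_count w X) = (\<Sum>S\<in>{S. card S = w}. int (EE X S))"
proof -
  have "B_count w X = (\<Sum>S\<in>{S. card S = w}. card {x\<in>{x\<in>X. hweight x = w}. supp x = S})"
    unfolding B_count_def by (rule card_fibers) (auto simp: hweight_supp)
  also have "\<dots> = (\<Sum>S\<in>{S. card S = w}. EE X S)" unfolding EE_def
    by (rule sum.cong[OF refl]) (auto intro: arg_cong[where f=card] simp: hweight_supp)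
  finally show ?thesis by simp
qed

lemma NN_ge4:
  assumes "4 \<le> card T"
  shows "NN V T = NN C0 T"
proof -
  obtain B where B: "B \<subseteq> T" "card B = 4"
    using exists_subset_between[of "{}" 4 T, OF _ assms] by auto
  obtain x y z u where xyzu: "B = {x,y,z,u}" "distinct [x,y,z,u]" using card4_obtain[OF B(2)] by blast
  obtain w0 where w0: "supp w0 \<subseteq> {x,y,z,u}" "\<forall>i<4. syn w0 i = s i" using Surj4[OF xyzu(2), of s] by blast
  have w0T: "supp w0 \<subseteq> T" using w0(1) B(1) xyzu(1) by blast
  define f where "f = (\<lambda>(x::'a option \<Rightarrow> 'a) p. x p - w0 p)"
  define g where "g = (\<lambda>(x::'a option \<Rightarrow> 'a) p. x p + w0 p)"
  have fV: "f x \<in> {c\<in>C0. supp c \<subseteq> T}" if x: "x \<in> {x\<in>V. supp x \<subseteq> T}" for x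
  proof -
    have "supp (f x) \<subseteq> supp x \<union> supp w0" by (auto simp: supp_def f_def)
    then have "supp (f x) \<subseteq> T" using x w0T by blast
    moreover have "f x \<in> C0" using x w0(2) by (simp add: arc_eq mem_V syn_diff f_def)
    ultimately show ?thesis by blast
  qed
  have gC: "g c \<in> {x\<in>V. supp x \<subseteq> T}" if c: "c \<in> {c\<in>C0. supp c \<subseteq> T}" for c
  proof -
    have "supp (g c) \<subseteq> supp c \<union> supp w0" by (auto simp: supp_def g_def)
    then have "supp (g c) \<subseteq> T" using c w0T by blast
    moreover have "g c \<in> V" using c w0(2) by (simp add: arc_eq mem_V syn_add g_def)
    ultimately show ?thesis by blast
  qed
  have "bij_betw f {x\<in>V. supp x \<subseteq> T} {c\<in>C0. supp c \<subseteq> T}"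
  proof (rule bij_betw_byWitness[where f' = g])
    show "\<forall>a\<in>{x\<in>V. supp x \<subseteq> T}. g (f a) = a" by (simp add: f_def g_def)
    show "\<forall>a\<in>{c\<in>C0. supp c \<subseteq> T}. f (g a) = a" by (simp add: f_def g_def)
    show "f ` {x\<in>V. supp x \<subseteq> T} \<subseteq> {c\<in>C0. supp c \<subseteq> T}" using fV by blast
    show "g ` {c\<in>C0. supp c \<subseteq> T} \<subseteq> {x\<in>V. supp x \<subseteq> T}" using gC by blast
  qed
  then show ?thesis unfolding NN_def by (rule bij_betw_same_card)
qed

lemma NN_C_small:
  assumes "card T \<le> 4"
  shows "NN C0 T = 1"
proof -
  have "{x\<in>C0. supp x \<subseteq> T} = {(\<lambda>_. 0)}"
  proof
    show "{x\<in>C0. supp x \<subseteq> T} \<subseteq> {(\<lambda>_. 0)}"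
    proof
      fix x assume x: "x \<in> {x\<in>C0. supp x \<subseteq> T}"
      then have "supp x \<subseteq> T" "\<forall>i<4. syn x i = 0" by (auto simp: arc_eq)
      then have "x = (\<lambda>_. 0)" by (rule Kle4[OF q3 assms])
      then show "x \<in> {(\<lambda>_. 0)}" by simp
    qed
    show "{(\<lambda>_. 0)} \<subseteq> {x\<in>C0. supp x \<subseteq> T}"
      by (auto simp: arc_eq syn_def supp_def)
  qed
  then show ?thesis unfolding NN_def by simp
qed

lemma NN_V_small:
  assumes "card T \<le> 3"
  shows "NN V T = (if T \<in> Sup3 then 1 else 0)"
proof (cases "T \<in> Sup3")
  case True
  then obtain w where w: "w \<in> V" "supp w \<subseteq> T" "card T = 3" by (auto simp: Sup3_def)
  have "{x\<in>V. supp x \<subseteq> T} = {w}"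
  proof
    show "{x\<in>V. supp x \<subseteq> T} \<subseteq> {w}"
    proof
      fix x assume "x \<in> {x\<in>V. supp x \<subseteq> T}"
      then have "x = w" using w by (intro uniq_supp[of x w T]) auto
      then show "x \<in> {w}" by simp
    qed
    show "{w} \<subseteq> {x\<in>V. supp x \<subseteq> T}" using w by simp
  qed
  then show ?thesis using True unfolding NN_def by simp
next
  case False
  have "{x\<in>V. supp x \<subseteq> T} = {}"
  proof (rule ccontr)
    assume "{x\<in>V. supp x \<subseteq> T} \<noteq> {}"
    then obtain x where x: "x \<in> V" "supp x \<subseteq> T" by blast
    have "3 \<le> card (supp x)" using wge3[OF x(1)] by (simp add: hweight_supp)
    moreover have "card (supp x) \<le> card T" using x(2) by (simp add: card_mono)
    ultimately have "card T = 3" using assms by simp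
    then show False using False x by (auto simp: Sup3_def)
  qed
  then show ?thesis using False unfolding NN_def by simp
qed

lemma NN_diff: "int (NN V T) - int (NN C0 T) = of_bool (T \<in> Sup3) - of_bool (card T \<le> 3)"
proof (cases "card T \<le> 3")
  case True
  have a: "NN V T = (if T \<in> Sup3 then 1 else 0)" by (rule NN_V_small[OF True])
  have b: "NN C0 T = 1" using True by (intro NN_C_small) simp
  show ?thesis unfolding a b using True by simp
next
  case False
  then have c: "T \<notin> Sup3" unfolding Sup3_def by simp
  have d: "NN V T = NN C0 T" using False by (intro NN_ge4) simp
  show ?thesis unfolding d using False c by simp
qed

lemma card_q: "card (UNIV :: 'a option set) = card (UNIV :: 'a set) + 1" by simp

lemma supersets:
  assumes "card T = 3" "3 \<le> w"
  shows "card {S :: 'a option set. card S = w \<and> T \<subseteq> S} = (card (UNIV::'a set) - 2) choose (w - 3)"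
proof -
  have finT: "finite T" by simp
  have "inj_on (\<lambda>S. S - T) {S. card S = w \<and> T \<subseteq> S}"
  proof (rule inj_onI)
    fix S1 S2 assume S1: "S1 \<in> {S. card S = w \<and> T \<subseteq> S}" and S2: "S2 \<in> {S. card S = w \<and> T \<subseteq> S}"
      and eq: "S1 - T = S2 - T"
    have "S1 = (S1 - T) \<union> T" using S1 by blast
    also have "\<dots> = (S2 - T) \<union> T" by (simp only: eq)
    also have "\<dots> = S2" using S2 by blast
    finally show "S1 = S2" .
  qed
  moreover have "(\<lambda>S. S - T) ` {S. card S = w \<and> T \<subseteq> S} = {R. R \<subseteq> UNIV - T \<and> card R = w - 3}"
  proof
    show "(\<lambda>S. S - T) ` {S. card S = w \<and> T \<subseteq> S} \<subseteq> {R. R \<subseteq> UNIV - T \<and> card R = w - 3}"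
    proof
      fix R assume "R \<in> (\<lambda>S. S - T) ` {S. card S = w \<and> T \<subseteq> S}"
      then obtain S where S: "card S = w" "T \<subseteq> S" "R = S - T" by blast
      have "card R = w - 3" using S card_Diff_subset[OF finT S(2)] assms(1) by simp
      moreover have "R \<subseteq> UNIV - T" using S(3) by blast
      ultimately show "R \<in> {R. R \<subseteq> UNIV - T \<and> card R = w - 3}" by blast
    qed
    show "{R. R \<subseteq> UNIV - T \<and> card R = w - 3} \<subseteq> (\<lambda>S. S - T) ` {S. card S = w \<and> T \<subseteq> S}"
    proof
      fix R assume R: "R \<in> {R. R \<subseteq> UNIV - T \<and> card R = w - 3}"
      have dj: "R \<inter> T = {}" using R by blast
      have "card (R \<union> T) = card R + card T" using dj by (intro card_Un_disjoint) simp_all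
      then have "card (R \<union> T) = w" using R assms by simp
      moreover have "R = (R \<union> T) - T" using dj by blast
      moreover have "T \<subseteq> R \<union> T" by blast
      ultimately show "R \<in> (\<lambda>S. S - T) ` {S. card S = w \<and> T \<subseteq> S}" by blast
    qed
  qed
  ultimately have "card {S :: 'a option set. card S = w \<and> T \<subseteq> S} = card {R. R \<subseteq> UNIV - T \<and> card R = w - 3}"
    using card_image by fastforce
  also have "\<dots> = card (UNIV - T) choose (w - 3)" by (rule n_subsets) simp
  also have "card (UNIV - T) = card (UNIV::'a set) - 2" using assms(1) by (simp add: card_Diff_subset)
  finally show ?thesis .
qed

lemma Sup3_card: "T \<in> Sup3 \<Longrightarrow> card T = 3" by (simp add: Sup3_def)

lemma pw: "3 \<le> w \<Longrightarrow> (-1::int) ^ (w - 3) = - ((-1) ^ w)"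
proof -
  assume "3 \<le> w"
  then obtain m where "w = m + 3" by (intro that[of "w - 3"]) simp
  then show ?thesis by (simp add: power_add)
qed

lemma Bw_inner:
  assumes S: "card S = w" and w: "4 \<le> w"
  shows "int (EE V S) - int (EE C0 S) = (-1) ^ (w - 3) * int (card (Pow S \<inter> Sup3)) + (-1) ^ w * int ((w - 1) choose 3)"
proof -
  have "int (EE V S) - int (EE C0 S) = (\<Sum>T\<in>Pow S. (-1) ^ (card S - card T) * int (NN V T)) - (\<Sum>T\<in>Pow S. (-1) ^ (card S - card T) * int (NN C0 T))"
    by (simp only: EE_mob)
  also have "\<dots> = (\<Sum>T\<in>Pow S. (-1) ^ (w - card T) * (int (NN V T) - int (NN C0 T)))"
    unfolding S by (simp only: sum_subtractf[symmetric] right_diff_distrib)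
  also have "\<dots> = (\<Sum>T\<in>Pow S. (-1) ^ (w - card T) * of_bool (T \<in> Sup3) - (-1) ^ (w - card T) * of_bool (card T \<le> 3))"
    by (simp only: NN_diff right_diff_distrib)
  also have "\<dots> = (\<Sum>T\<in>Pow S. (-1) ^ (w - card T) * of_bool (T \<in> Sup3))
                  - (\<Sum>T\<in>Pow S. (-1) ^ (w - card T) * of_bool (card T \<le> 3))"
    by (simp only: sum_subtractf)
  also have "(\<Sum>T\<in>Pow S. (-1::int) ^ (w - card T) * of_bool (T \<in> Sup3)) = (\<Sum>T\<in>Pow S. (-1) ^ (w - 3) * of_bool (T \<in> Sup3))"
    by (rule sum.cong[OF refl]) (auto simp: Sup3_card)
  also have "\<dots> = (-1) ^ (w - 3) * int (card (Pow S \<inter> Sup3))"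
    by (simp only: sum_distrib_left[symmetric]) simp
  also have "(\<Sum>T\<in>Pow S. (-1::int) ^ (w - card T) * of_bool (card T \<le> 3)) = - ((-1) ^ w * of_nat ((w - 1) choose 3))"
    using alt3[OF _ S w] by simp
  finally show ?thesis by simp
qed

lemma Bw_swap:
  assumes "4 \<le> w"
  shows "(\<Sum>S\<in>{S :: 'a option set. card S = w}. int (card (Pow S \<inter> Sup3))) = int (card Sup3) * int ((card (UNIV::'a set) - 2) choose (w - 3))"
proof -
  let ?q = "card (UNIV::'a set)"
  let ?SS = "{S :: 'a option set. card S = w}"
  have "(\<Sum>S\<in>?SS. int (card (Pow S \<inter> Sup3))) = (\<Sum>S\<in>?SS. \<Sum>T\<in>Sup3. of_bool (T \<subseteq> S))"
  proof (rule sum.cong[OF refl])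
    fix S
    have "(\<Sum>T\<in>Sup3. (of_bool (T \<subseteq> S) :: int)) = int (card (Sup3 \<inter> {T. T \<subseteq> S}))" by simp
    also have "Sup3 \<inter> {T. T \<subseteq> S} = Pow S \<inter> Sup3" by blast
    finally show "int (card (Pow S \<inter> Sup3)) = (\<Sum>T\<in>Sup3. of_bool (T \<subseteq> S))" by simp
  qed
  also have "\<dots> = (\<Sum>T\<in>Sup3. \<Sum>S\<in>?SS. of_bool (T \<subseteq> S))" by (rule sum.swap)
  also have "\<dots> = (\<Sum>T\<in>Sup3. int ((?q - 2) choose (w - 3)))"
  proof (rule sum.cong[OF refl])
    fix T assume T: "T \<in> Sup3"
    have "(\<Sum>S\<in>?SS. (of_bool (T \<subseteq> S) :: int)) = int (card (?SS \<inter> {S. T \<subseteq> S}))" by simp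
    also have "?SS \<inter> {S. T \<subseteq> S} = {S. card S = w \<and> T \<subseteq> S}" by blast
    also have "card \<dots> = (?q - 2) choose (w - 3)" using supersets[OF Sup3_card[OF T]] assms by simp
    finally show "(\<Sum>S\<in>?SS. (of_bool (T \<subseteq> S) :: int)) = int ((?q - 2) choose (w - 3))" .
  qed
  also have "\<dots> = int (card Sup3) * int ((?q - 2) choose (w - 3))" by simp
  finally show ?thesis .
qed

lemma Bw:
  assumes "4 \<le> w"
  shows "int (B_count w V) = int (A_count w C0)
     + (-1) ^ w * (int ((card (UNIV::'a set) + 1) choose w) * int ((w - 1) choose 3)
                   - int ((card (UNIV::'a set) - 2) choose (w - 3)) * int (B_count 3 V))"
proof -
  let ?q = "card (UNIV::'a set)"
  let ?SS = "{S :: 'a option set. card S = w}"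
  have AB: "A_count w C0 = B_count w C0" by (simp add: A_count_def B_count_def)
  have pw': "(-1::int) ^ (w - 3) = - ((-1) ^ w)" using assms by (intro pw) simp
  have cSS: "card ?SS = (?q + 1) choose w"
    using n_subsets[of "UNIV :: 'a option set" w] by simp
  have "int (B_count w V) - int (B_count w C0) = (\<Sum>S\<in>?SS. int (EE V S) - int (EE C0 S))"
    by (simp only: B_EE sum_subtractf)
  also have "\<dots> = (\<Sum>S\<in>?SS. (-1) ^ (w - 3) * int (card (Pow S \<inter> Sup3)) + (-1) ^ w * int ((w - 1) choose 3))"
    by (rule sum.cong[OF refl]) (simp add: Bw_inner assms)
  also have "\<dots> = (-1) ^ (w - 3) * (\<Sum>S\<in>?SS. int (card (Pow S \<inter> Sup3))) + int (card ?SS) * ((-1) ^ w * int ((w - 1) choose 3))"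
    by (simp only: sum.distrib sum_distrib_left[symmetric] sum_constant of_nat_id) simp
  also have "\<dots> = (-1) ^ w * (int ((?q + 1) choose w) * int ((w - 1) choose 3) - int ((?q - 2) choose (w - 3)) * int (B_count 3 V))"
    using assms unfolding Bw_swap[OF assms] cSS pw' B3_Sup3 by (simp add: algebra_simps)
  finally show ?thesis using AB by simp
qed

end

lemma dec3: "(q::nat) mod 3 = j \<Longrightarrow> \<exists>k. q = 3*k + j"
  by (metis div_mult_mod_eq mult.commute)
lemma e4: "(e::nat) \<le> 3 \<Longrightarrow> e = 0 \<or> e = 1 \<or> e = 2 \<or> e = 3" by auto
lemma e3: "(e::nat) \<le> 1 \<or> e = q \<Longrightarrow> e = 0 \<or> e = 1 \<or> e = q" by auto

lemma ar_a0: "6*b + q + 2 = Q + 2*e \<Longrightarrow> e \<le> 3 \<Longrightarrow> (q::nat) mod 3 = 0 \<Longrightarrow> Q mod 3 = 0 \<Longrightarrow> 6*b + q = Q"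
proof -
  assume h: "6*b + q + 2 = Q + 2*e" "e \<le> 3" "q mod 3 = 0" "Q mod 3 = 0"
  obtain k m where km: "q = 3*k + 0" "Q = 3*m + 0" using dec3[OF h(3)] dec3[OF h(4)] by blast
  have "e \<noteq> 0" using h(1) km by presburger
  moreover have "e \<noteq> 2" using h(1) km by presburger
  moreover have "e \<noteq> 3" using h(1) km by presburger
  ultimately have "e = 1" using e4[OF h(2)] by blast
  then show ?thesis using h(1) by simp
qed
lemma ar_a1: "6*b + q + 2 = Q + 2*e \<Longrightarrow> e \<le> 3 \<Longrightarrow> (q::nat) mod 3 = 1 \<Longrightarrow> Q mod 3 = 1 \<Longrightarrow> 6*b + q = Q"
proof -
  assume h: "6*b + q + 2 = Q + 2*e" "e \<le> 3" "q mod 3 = 1" "Q mod 3 = 1"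
  obtain k m where km: "q = 3*k + 1" "Q = 3*m + 1" using dec3[OF h(3)] dec3[OF h(4)] by blast
  have "e \<noteq> 0" using h(1) km by presburger
  moreover have "e \<noteq> 2" using h(1) km by presburger
  moreover have "e \<noteq> 3" using h(1) km by presburger
  ultimately have "e = 1" using e4[OF h(2)] by blast
  then show ?thesis using h(1) by simp
qed
lemma ar_a2: "6*b + q + 2 = Q + 2*e \<Longrightarrow> e \<le> 3 \<Longrightarrow> (q::nat) mod 3 = 2 \<Longrightarrow> Q mod 3 = 1 \<Longrightarrow> 6*b + q + 2 = Q \<or> 6*b + q = Q + 4"
proof -
  assume h: "6*b + q + 2 = Q + 2*e" "e \<le> 3" "q mod 3 = 2" "Q mod 3 = 1"
  obtain k m where km: "q = 3*k + 2" "Q = 3*m + 1" using dec3[OF h(3)] dec3[OF h(4)] by blast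
  have "e \<noteq> 1" using h(1) km by presburger
  moreover have "e \<noteq> 2" using h(1) km by presburger
  ultimately have "e = 0 \<or> e = 3" using e4[OF h(2)] by blast
  then show ?thesis using h(1) by auto
qed
lemma ar_b0: "6*b + 3*q = Q + 2*e \<Longrightarrow> e \<le> 1 \<or> e = q \<Longrightarrow> (q::nat) mod 3 = 0 \<Longrightarrow> Q mod 3 = 0 \<Longrightarrow> 6*b + 3*q = Q \<or> 6*b + q = Q"
proof -
  assume h: "6*b + 3*q = Q + 2*e" "e \<le> 1 \<or> e = q" "q mod 3 = 0" "Q mod 3 = 0"
  obtain k m where km: "q = 3*k + 0" "Q = 3*m + 0" using dec3[OF h(3)] dec3[OF h(4)] by blast
  have "e \<noteq> 1 \<or> e = q" using h(1) km by presburger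
  then have "e = 0 \<or> e = q" using e3[OF h(2)] by blast
  then show ?thesis using h(1) by auto
qed
lemma ar_b1: "6*b + 3*q = Q + 2*e \<Longrightarrow> e \<le> 1 \<or> e = q \<Longrightarrow> (q::nat) mod 3 = 1 \<Longrightarrow> Q mod 3 = 1 \<Longrightarrow> 6*b + 3*q = Q + 2 \<or> 6*b + q = Q"
proof -
  assume h: "6*b + 3*q = Q + 2*e" "e \<le> 1 \<or> e = q" "q mod 3 = 1" "Q mod 3 = 1"
  obtain k m where km: "q = 3*k + 1" "Q = 3*m + 1" using dec3[OF h(3)] dec3[OF h(4)] by blast
  have "e \<noteq> 0" using h(1) km by presburger
  then have "e = 1 \<or> e = q" using e3[OF h(2)] by blast
  then show ?thesis using h(1) by auto
qed
lemma ar_b2: "6*b + 3*q = Q + 2*e \<Longrightarrow> e \<le> 1 \<or> e = q \<Longrightarrow> (q::nat) mod 3 = 2 \<Longrightarrow> Q mod 3 = 1 \<Longrightarrow> 6*b + 3*q = Q + 2"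
proof -
  assume h: "6*b + 3*q = Q + 2*e" "e \<le> 1 \<or> e = q" "q mod 3 = 2" "Q mod 3 = 1"
  obtain k m where km: "q = 3*k + 2" "Q = 3*m + 1" using dec3[OF h(3)] dec3[OF h(4)] by blast
  have "e \<noteq> 0" using h(1) km by presburger
  moreover have "e \<noteq> q"
  proof
    assume "e = q"
    then have "6*b + q = Q" using h(1) by simp
    then show False using km by presburger
  qed
  ultimately have "e = 1" using e3[OF h(2)] by blast
  then show ?thesis using h(1) by simp
qed

lemma arith_core:
  fixes b q n e :: nat
  assumes h: "6*b + 3*n = n*n + 2*e" and c: "(n = q+1 \<and> e \<le> 3) \<or> (n = q \<and> (e \<le> 1 \<or> e = n))"
  shows "(q mod 3 = 1 \<longrightarrow> (6*b + 3*q = q*q + 2 \<or> 6*b + q = q*q)) \<and>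
         (q mod 3 = 2 \<longrightarrow> (6*b + 3*q = q*q + 2 \<or> 6*b + q + 2 = q*q \<or> 6*b + q = q*q + 4)) \<and>
         (q mod 3 = 0 \<longrightarrow> (6*b + 3*q = q*q \<or> 6*b + q = q*q))"
proof -
  define Q where "Q = q * q"
  have key: "Q mod 3 = ((q mod 3) * (q mod 3)) mod 3" unfolding Q_def by (simp add: mod_mult_eq)
  have k0: "q mod 3 = 0 \<Longrightarrow> Q mod 3 = 0" using key by simp
  have k1: "q mod 3 = 1 \<Longrightarrow> Q mod 3 = 1" using key by simp
  have k2: "q mod 3 = 2 \<Longrightarrow> Q mod 3 = 1" using key by simp
  from c show ?thesis
  proof
    assume a: "n = q + 1 \<and> e \<le> 3"
    then have "6*b + 3*(q+1) = Q + 2*q + 1 + 2*e" using h unfolding Q_def by (simp add: algebra_simps)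
    then have eq: "6*b + q + 2 = Q + 2*e" by simp
    have e3: "e \<le> 3" using a by simp
    show ?thesis unfolding Q_def[symmetric]
    proof (intro conjI impI)
      assume r: "q mod 3 = 1" show "6*b + 3*q = Q + 2 \<or> 6*b + q = Q" using ar_a1[OF eq e3 r k1[OF r]] by simp
    next
      assume r: "q mod 3 = 2" show "6*b + 3*q = Q + 2 \<or> 6*b + q + 2 = Q \<or> 6*b + q = Q + 4"
        using ar_a2[OF eq e3 r k2[OF r]] by simp
    next
      assume r: "q mod 3 = 0" show "6*b + 3*q = Q \<or> 6*b + q = Q" using ar_a0[OF eq e3 r k0[OF r]] by simp
    qed
  next
    assume a: "n = q \<and> (e \<le> 1 \<or> e = n)"
    then have eq: "6*b + 3*q = Q + 2*e" using h unfolding Q_def by simp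
    have a2: "e \<le> 1 \<or> e = q" using a by auto
    show ?thesis unfolding Q_def[symmetric]
    proof (intro conjI impI)
      assume r: "q mod 3 = 1" show "6*b + 3*q = Q + 2 \<or> 6*b + q = Q" using ar_b1[OF eq a2 r k1[OF r]] by simp
    next
      assume r: "q mod 3 = 2" show "6*b + 3*q = Q + 2 \<or> 6*b + q + 2 = Q \<or> 6*b + q = Q + 4"
        using ar_b2[OF eq a2 r k2[OF r]] by simp
    next
      assume r: "q mod 3 = 0" show "6*b + 3*q = Q \<or> 6*b + q = Q" using ar_b0[OF eq a2 r k0[OF r]] by simp
    qed
  qed
qed

context cw3 begin

lemma s2_nz_B:
  assumes "s 0 = 0" "s 1 = 0"
  shows "s 2 \<noteq> 0"
proof
  assume "s 2 = 0"
  then have "\<forall>i<4. s i = s 3 * pc_entry i None + 0 * pc_entry i None"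
    using assms unfolding less4 by (auto simp: pc_None)
  then show False by (rule no_small)
qed

lemma LfB3: "s 0 = 0 \<Longrightarrow> s 1 = 0 \<Longrightarrow> Lf (hpol (Some a) (Some b) (Some c)) s = s 3 - (a+b+c) * s 2"
  by (simp add: Lf_def hpol_def pf_def eval_nat_numeral algebra_simps)
lemma LfB2: "s 0 = 0 \<Longrightarrow> s 1 = 0 \<Longrightarrow> Lf (hpol None (Some a) (Some b)) s = s 2"
    "s 0 = 0 \<Longrightarrow> s 1 = 0 \<Longrightarrow> Lf (hpol (Some a) None (Some b)) s = s 2"
    "s 0 = 0 \<Longrightarrow> s 1 = 0 \<Longrightarrow> Lf (hpol (Some a) (Some b) None) s = s 2"
  by (simp_all add: Lf_def hpol_def pf_def eval_nat_numeral algebra_simps)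

lemma caseB:
  assumes s0: "s 0 = 0" and s1: "s 1 = 0"
  shows "\<exists>n e. 6 * B_count 3 V + 3*n = n*n + 2*e \<and> n = card (UNIV::'a set) \<and> (e \<le> 1 \<or> e = n)"
proof -
  have s2: "s 2 \<noteq> 0" by (rule s2_nz_B[OF s0 s1])
  define X where "X = range (Some :: 'a \<Rightarrow> 'a option)"
  define R where "R = (\<lambda>x y z. s 2 * (the x + the y + the z) = s 3)"
  have crit: "Lf (hpol x y z) s = 0 \<longleftrightarrow> x \<in> X \<and> y \<in> X \<and> z \<in> X \<and> R x y z" if d: "distinct [x,y,z]" for x y z
  proof (cases x)
    case None
    then obtain a b where "y = Some a" "z = Some b" using d by (cases y; cases z) auto
    then show ?thesis using None LfB2[OF s0 s1] s2 by (simp add: X_def)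
  next
    case (Some a) note xa = this
    show ?thesis
    proof (cases y)
      case None
      then obtain b where "z = Some b" using d by (cases z) auto
      then show ?thesis using None xa LfB2[OF s0 s1] s2 by (simp add: X_def)
    next
      case (Some b) note yb = this
      show ?thesis
      proof (cases z)
        case None
        then show ?thesis using xa yb LfB2[OF s0 s1] s2 by (simp add: X_def)
      next
        case (Some c)
        have "Lf (hpol x y z) s = s 3 - (a+b+c) * s 2" using xa yb Some LfB3[OF s0 s1] by simp
        moreover have "(s 3 - (a+b+c) * s 2 = 0) \<longleftrightarrow> s 2 * (a+b+c) = s 3"
          by (simp only: right_minus_eq) (auto simp: mult.commute)
        ultimately show ?thesis using xa yb Some by (simp add: X_def R_def)
      qed
    qed
  qed
  have sym1: "R x y z \<Longrightarrow> R y x z" for x y z by (simp add: R_def ac_simps)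
  have sym2: "R x y z \<Longrightarrow> R x z y" for x y z by (simp add: R_def ac_simps)
  have fn: "\<exists>!z. z \<in> X \<and> R x y z" if xyX: "x \<in> X" "y \<in> X" for x y
  proof -
    obtain a b where ab: "x = Some a" "y = Some b" using xyX by (auto simp: X_def)
    let ?c = "s 3 / s 2 - a - b"
    show ?thesis
    proof (rule ex1I[of _ "Some ?c"])
      have "Some ?c \<in> X" by (simp add: X_def)
      moreover have "R x y (Some ?c)" using ab s2 by (simp add: R_def field_simps)
      ultimately show "Some ?c \<in> X \<and> R x y (Some ?c)" by blast
      fix z assume z: "z \<in> X \<and> R x y z"
      then obtain c where c: "z = Some c" by (auto simp: X_def)
      then have "s 2 * (a + b + c) = s 3" using z ab by (simp add: R_def)
      then have "c = ?c" using s2 by (simp add: field_simps)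
      then show "z = Some ?c" using c by simp
    qed
  qed
  have finX: "finite X" by simp
  have cnt: "6 * card {T. T \<subseteq> X \<and> card T = 3 \<and> (\<exists>x y z. T = {x,y,z} \<and> R x y z)} + 3 * card X
         = card X * card X + 2 * card {x\<in>X. R x x x}"
    by (rule count3[OF finX sym1 sym2 fn])
  have B3: "B_count 3 V = card {T. T \<subseteq> X \<and> card T = 3 \<and> (\<exists>x y z. T = {x,y,z} \<and> R x y z)}"
    unfolding B3_Sup3 using Sup3_eq[of X R] crit by simp
  have cX: "card X = card (UNIV :: 'a set)" unfolding X_def by (simp add: card_image)
  have e: "card {x\<in>X. R x x x} \<le> 1 \<or> {x\<in>X. R x x x} = X"
  proof -
    have t3: "t + t + t = 3 * t" for t :: 'a by (simp add: algebra_simps)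
    show ?thesis
    proof (cases "(3::'a) = 0")
      case False
      have "{x\<in>X. R x x x} \<subseteq> {Some (s 3 / (3 * s 2))}"
        using False s2 by (auto simp: X_def R_def t3 field_simps)
      then have "card {x\<in>X. R x x x} \<le> card {Some (s 3 / (3 * s 2))}" by (intro card_mono) auto
      then show ?thesis by simp
    next
      case True
      show ?thesis
      proof (cases "s 3 = 0")
        case True
        then have "{x\<in>X. R x x x} = X" using \<open>(3::'a) = 0\<close> by (auto simp: X_def R_def t3)
        then show ?thesis by simp
      next
        case False
        then have "card {x\<in>X. R x x x} = 0" using \<open>(3::'a) = 0\<close> by (auto simp: X_def R_def t3)
        then show ?thesis by linarith
      qed
    qed
  qed
  show ?thesis
  proof (intro exI conjI)
    show "6 * B_count 3 V + 3 * card X = card X * card X + 2 * card {x\<in>X. R x x x}" using cnt B3 by simp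
    show "card X = card (UNIV :: 'a set)" by (rule cX)
    show "card {x\<in>X. R x x x} \<le> 1 \<or> card {x\<in>X. R x x x} = card X" using e by auto
  qed
qed

end

lemma deg3: "degree [:a,b,c,d:] \<le> 3"
  by (rule degree_le) (auto simp: coeff_pCons split: nat.splits)
lemma deg2: "degree [:a,b,c:] \<le> 2"
  by (rule degree_le) (auto simp: coeff_pCons split: nat.splits)

locale cwA = cw3 v for v :: "'a::{field,finite} option \<Rightarrow> 'a" +
  fixes p r :: 'a
  assumes e2: "s 2 = p * s 1 + r * s 0"
    and e3: "s 3 = p * (p * s 1 + r * s 0) + r * s 1"
    and nz: "s 0 \<noteq> 0 \<or> s 1 \<noteq> 0"
begin

definition mulR :: "'a \<times> 'a \<Rightarrow> 'a \<times> 'a \<Rightarrow> 'a \<times> 'a" where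
  "mulR w1 w2 = (fst w1 * fst w2 + r * snd w1 * snd w2, fst w1 * snd w2 + fst w2 * snd w1 + p * snd w1 * snd w2)"
definition rho :: "'a option \<Rightarrow> 'a \<times> 'a" where
  "rho x = (case x of Some t \<Rightarrow> (-t, 1) | None \<Rightarrow> (1, 0))"
definition Lin :: "'a \<times> 'a \<Rightarrow> 'a" where
  "Lin w = fst w * s 0 + snd w * s 1"
definition Nm :: "'a \<times> 'a \<Rightarrow> 'a" where
  "Nm w = fst w * fst w + p * fst w * snd w - r * snd w * snd w"
definition gg :: "'a \<Rightarrow> 'a" where
  "gg t = t * t - p * t - r"
definition XA :: "'a option set" where
  "XA = {x. Nm (rho x) \<noteq> 0}"
definition RA :: "'a option \<Rightarrow> 'a option \<Rightarrow> 'a option \<Rightarrow> bool" where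
  "RA x y z = (Lin (mulR (mulR (rho x) (rho y)) (rho z)) = 0)"

lemma mulR_comm: "mulR a b = mulR b a"
  by (simp add: mulR_def algebra_simps)

lemma mulR_assoc: "mulR (mulR a b) c = mulR a (mulR b c)"
  by (simp add: mulR_def algebra_simps)

lemma Nm_mult: "Nm (mulR a b) = Nm a * Nm b"
  by (simp add: Nm_def mulR_def algebra_simps)

lemma Nm_rho: "Nm (rho (Some t)) = gg t" "Nm (rho None) = 1"
  by (simp_all add: Nm_def rho_def gg_def)

lemma e2s: "s (Suc (Suc 0)) = p * s (Suc 0) + r * s 0" using e2 by (simp add: eval_nat_numeral)
lemma e3s: "s (Suc (Suc (Suc 0))) = p * (p * s (Suc 0) + r * s 0) + r * s (Suc 0)" using e3 by (simp add: eval_nat_numeral)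

lemma I1: "Lf (hpol x y z) s = Lin (mulR (mulR (rho x) (rho y)) (rho z))"
  by (cases x; cases y; cases z)
     (simp_all add: Lf_def hpol_def pf_def eval_nat_numeral e2s e3s mulR_def rho_def Lin_def algebra_simps)


lemma r_root: "gg a = 0 \<Longrightarrow> r = a * a - p * a"
  by (simp add: gg_def algebra_simps)

lemma no_small4:
  assumes "s 0 = \<alpha> * pc_entry 0 x + \<beta> * pc_entry 0 y" "s 1 = \<alpha> * pc_entry 1 x + \<beta> * pc_entry 1 y"
    "s 2 = \<alpha> * pc_entry 2 x + \<beta> * pc_entry 2 y" "s 3 = \<alpha> * pc_entry 3 x + \<beta> * pc_entry 3 y"
  shows False
proof -
  have "\<forall>i<4. s i = \<alpha> * pc_entry i x + \<beta> * pc_entry i y"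
  proof (intro allI impI)
    fix i :: nat assume "i < 4"
    then consider "i = 0" | "i = 1" | "i = 2" | "i = 3" by linarith
    then show "s i = \<alpha> * pc_entry i x + \<beta> * pc_entry i y" using assms by cases simp_all
  qed
  then show False by (rule no_small)
qed

lemma no_two_roots:
  assumes "gg a = 0" "gg b = 0"
  shows "a = b"
proof (rule ccontr)
  assume ab: "a \<noteq> b"
  then have d: "a - b \<noteq> 0" by simp
  have "(a - b) * (a + b - p) = gg a - gg b" by (simp add: gg_def algebra_simps)
  then have "(a - b) * (a + b - p) = 0" using assms by simp
  then have pe: "p = a + b" using d by simp
  have re: "r = - (a * b)" using r_root[OF assms(1)] pe by (simp add: algebra_simps)
  define \<alpha> where "\<alpha> = (s 1 - b * s 0) / (a - b)"
  define \<beta> where "\<beta> = (a * s 0 - s 1) / (a - b)"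
  have "\<alpha> + \<beta> = ((s 1 - b * s 0) + (a * s 0 - s 1)) / (a - b)"
    unfolding \<alpha>_def \<beta>_def by (simp only: add_divide_distrib)
  also have "(s 1 - b * s 0) + (a * s 0 - s 1) = s 0 * (a - b)" by (simp add: algebra_simps)
  finally have "\<alpha> + \<beta> = s 0" using d by simp
  then have h0: "s 0 = \<alpha> * pc_entry 0 (Some a) + \<beta> * pc_entry 0 (Some b)"
    by (simp add: pc_Some)
  have "\<alpha> * a + \<beta> * b = ((s 1 - b * s 0) * a + (a * s 0 - s 1) * b) / (a - b)"
    unfolding \<alpha>_def \<beta>_def by (simp add: add_divide_distrib)
  also have "(s 1 - b * s 0) * a + (a * s 0 - s 1) * b = s 1 * (a - b)" by (simp add: algebra_simps)
  finally have "\<alpha> * a + \<beta> * b = s 1" using d by simp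
  note S1 = this
  then have h1: "s 1 = \<alpha> * pc_entry 1 (Some a) + \<beta> * pc_entry 1 (Some b)"
    by (simp add: pc_Some)
  have S0: "\<alpha> + \<beta> = s 0" using h0 by (simp add: pc_Some)
  have "\<alpha>*(a*a) + \<beta>*(b*b) = (a+b)*(\<alpha>*a + \<beta>*b) - a*b*(\<alpha> + \<beta>)" by (simp add: algebra_simps)
  also have "\<dots> = s 2" unfolding S0 S1 e2 pe re by (simp add: algebra_simps)
  finally have S2: "\<alpha>*(a*a) + \<beta>*(b*b) = s 2" .
  then have h2: "s 2 = \<alpha> * pc_entry 2 (Some a) + \<beta> * pc_entry 2 (Some b)"
    by (simp add: pc_Some power2_eq_square)
  have "\<alpha>*(a*a*a) + \<beta>*(b*b*b) = (a+b)*(\<alpha>*(a*a) + \<beta>*(b*b)) - a*b*(\<alpha>*a + \<beta>*b)" by (simp add: algebra_simps)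
  also have "\<dots> = s 3" unfolding S2 S1 e3 e2 pe re by (simp add: algebra_simps)
  finally have "\<alpha>*(a*a*a) + \<beta>*(b*b*b) = s 3" .
  then have h3: "s 3 = \<alpha> * pc_entry 3 (Some a) + \<beta> * pc_entry 3 (Some b)"
    by (simp add: pc_Some power3_eq_cube)
  show False by (rule no_small4[OF h0 h1 h2 h3])
qed

lemma kappa_nz:
  assumes "gg a = 0"
  shows "s 1 - a * s 0 \<noteq> 0"
proof
  assume "s 1 - a * s 0 = 0"
  then have s1: "s 1 = a * s 0" by simp
  have re: "r = a * a - p * a" using r_root[OF assms] .
  have h0: "s 0 = s 0 * pc_entry 0 (Some a) + 0 * pc_entry 0 None" by (simp add: pc_Some)
  have h1: "s 1 = s 0 * pc_entry 1 (Some a) + 0 * pc_entry 1 None" using s1 by (simp add: pc_Some)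
  have h2: "s 2 = s 0 * pc_entry 2 (Some a) + 0 * pc_entry 2 None"
    unfolding e2 s1 re by (simp add: pc_Some algebra_simps power2_eq_square)
  have h3: "s 3 = s 0 * pc_entry 3 (Some a) + 0 * pc_entry 3 None"
    unfolding e3 s1 re by (simp add: pc_Some algebra_simps power3_eq_cube)
  show False by (rule no_small4[OF h0 h1 h2 h3])
qed

lemma root_mult:
  assumes "gg a = 0" "Nm w \<noteq> 0"
  shows "Lin (mulR w (rho (Some a))) \<noteq> 0"
proof -
  have re: "r = a * a - p * a" using r_root[OF assms(1)] .
  define c where "c = fst w + snd w * (p - a)"
  have L: "Lin (mulR w (rho (Some a))) = c * (s 1 - a * s 0)"
    unfolding Lin_def mulR_def rho_def c_def by (simp add: re algebra_simps)
  have N: "c * (fst w + snd w * a) = Nm w"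
    unfolding Nm_def c_def by (simp add: re algebra_simps)
  have "c \<noteq> 0" using N assms(2) by auto
  then show ?thesis using L kappa_nz[OF assms(1)] by simp
qed

lemma notXA: "x \<notin> XA \<Longrightarrow> \<exists>a. x = Some a \<and> gg a = 0"
  by (cases x) (auto simp: XA_def Nm_rho)

lemma RA_sym1: "RA x y z = RA y x z"
  unfolding RA_def by (simp add: mulR_comm)
lemma RA_sym2: "RA x y z = RA x z y"
  unfolding RA_def by (metis mulR_assoc mulR_comm)

lemma bad1:
  assumes d: "distinct [x,y,z]" and x: "x \<notin> XA"
  shows "\<not> RA x y z"
proof -
  obtain a where a: "x = Some a" "gg a = 0" using notXA[OF x] by blast
  have yX: "y \<in> XA"
  proof (rule ccontr)
    assume "y \<notin> XA"
    then obtain b where "y = Some b" "gg b = 0" using notXA by blast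
    then show False using a d no_two_roots by auto
  qed
  have zX: "z \<in> XA"
  proof (rule ccontr)
    assume "z \<notin> XA"
    then obtain b where "z = Some b" "gg b = 0" using notXA by blast
    then show False using a d no_two_roots by auto
  qed
  define w where "w = mulR (rho y) (rho z)"
  have Nw: "Nm w \<noteq> 0" using yX zX by (simp add: w_def Nm_mult XA_def)
  have "mulR (mulR (rho x) (rho y)) (rho z) = mulR w (rho x)"
    unfolding w_def by (metis mulR_assoc mulR_comm)
  then show ?thesis unfolding RA_def using root_mult[OF a(2) Nw] a(1) by simp
qed

lemma critA:
  assumes d: "distinct [x,y,z]"
  shows "Lf (hpol x y z) s = 0 \<longleftrightarrow> x \<in> XA \<and> y \<in> XA \<and> z \<in> XA \<and> RA x y z"
proof
  assume L: "Lf (hpol x y z) s = 0"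
  then have R: "RA x y z" by (simp add: RA_def I1)
  have "x \<in> XA" using bad1[OF d] R by blast
  moreover have "y \<in> XA" using bad1[of y x z] d R RA_sym1 by auto
  moreover have "z \<in> XA" using bad1[of z x y] d R RA_sym1 RA_sym2 by auto
  ultimately show "x \<in> XA \<and> y \<in> XA \<and> z \<in> XA \<and> RA x y z" using R by blast
next
  assume "x \<in> XA \<and> y \<in> XA \<and> z \<in> XA \<and> RA x y z"
  then show "Lf (hpol x y z) s = 0" by (simp add: RA_def I1)
qed


lemma fnA:
  assumes xX: "x \<in> XA" and yX: "y \<in> XA"
  shows "\<exists>!z. z \<in> XA \<and> RA x y z"
proof -
  define w where "w = mulR (rho x) (rho y)"
  have Nw: "Nm w \<noteq> 0" using xX yX by (simp add: w_def Nm_mult XA_def)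
  define \<alpha> where "\<alpha> = Lin w"
  define \<beta> where "\<beta> = Lin (mulR w (0,1))"
  have RAz: "RA x y z = (Lin (mulR w (rho z)) = 0)" for z by (simp add: RA_def w_def)
  have hS: "Lin (mulR w (rho (Some t))) = \<beta> - t * \<alpha>" for t
    unfolding \<alpha>_def \<beta>_def Lin_def mulR_def rho_def by (simp add: algebra_simps)
  have hN: "Lin (mulR w (rho None)) = \<alpha>"
    unfolding \<alpha>_def Lin_def mulR_def rho_def by simp
  have ab: "\<alpha> \<noteq> 0 \<or> \<beta> \<noteq> 0"
  proof (rule ccontr)
    assume "\<not> (\<alpha> \<noteq> 0 \<or> \<beta> \<noteq> 0)"
    then have a0: "\<alpha> = 0" "\<beta> = 0" by auto
    have "Nm w * s 0 = (fst w + p * snd w) * \<alpha> - snd w * \<beta>"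
      unfolding Nm_def \<alpha>_def \<beta>_def Lin_def mulR_def by (simp add: algebra_simps)
    then have "s 0 = 0" using a0 Nw by simp
    moreover have "Nm w * s 1 = fst w * \<beta> - r * snd w * \<alpha>"
      unfolding Nm_def \<alpha>_def \<beta>_def Lin_def mulR_def by (simp add: algebra_simps)
    then have "s 1 = 0" using a0 Nw by simp
    ultimately show False using nz by simp
  qed
  show ?thesis
  proof (cases "\<alpha> = 0")
    case True
    then have b: "\<beta> \<noteq> 0" using ab by simp
    show ?thesis
    proof (rule ex1I[of _ None])
      show "None \<in> XA \<and> RA x y None" using True by (simp add: RAz hN XA_def Nm_rho)
      fix z assume z: "z \<in> XA \<and> RA x y z"
      show "z = None"
      proof (cases z)
        case (Some t)
        then have "\<beta> - t * \<alpha> = 0" using z by (simp add: RAz hS)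
        then show ?thesis using True b by simp
      qed simp
    qed
  next
    case False
    define t where "t = \<beta> / \<alpha>"
    have tz: "\<beta> - t * \<alpha> = 0" using False by (simp add: t_def)
    have tX: "Some t \<in> XA"
    proof (rule ccontr)
      assume "Some t \<notin> XA"
      then have "gg t = 0" by (simp add: XA_def Nm_rho)
      then have "Lin (mulR w (rho (Some t))) \<noteq> 0" using root_mult Nw by blast
      then show False using hS tz by simp
    qed
    show ?thesis
    proof (rule ex1I[of _ "Some t"])
      show "Some t \<in> XA \<and> RA x y (Some t)" using tX tz by (simp add: RAz hS)
      fix z assume z: "z \<in> XA \<and> RA x y z"
      show "z = Some t"
      proof (cases z)
        case None
        then have "\<alpha> = 0" using z by (simp add: RAz hN)
        then show ?thesis using False by simp
      next
        case (Some t')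
        then have "\<beta> - t' * \<alpha> = 0" using z by (simp add: RAz hS)
        then have "t' = t" using False unfolding t_def by (simp add: field_simps)
        then show ?thesis using Some by simp
      qed
    qed
  qed
qed

lemma cube_None: "Lin (mulR (mulR (rho None) (rho None)) (rho None)) = s 0"
  by (simp add: Lin_def mulR_def rho_def)

lemma cube_Some: "Lin (mulR (mulR (rho (Some t)) (rho (Some t))) (rho (Some t)))
  = poly [:p*r*s 0 + (p*p + r)*s 1, -(3*(r*s 0 + p*s 1)), 3*s 1, - s 0:] t"
  unfolding Lin_def mulR_def rho_def by (simp; algebra)

lemma RA_diag: "RA x x x = (Lin (mulR (mulR (rho x) (rho x)) (rho x)) = 0)"
  by (simp add: RA_def)

lemma e_irred:
  assumes nr: "\<forall>t. gg t \<noteq> 0"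
  shows "card {x\<in>XA. RA x x x} \<le> 3"
proof (cases "s 0 = 0")
  case False
  define P where "P = [:p*r*s 0 + (p*p + r)*s 1, -(3*(r*s 0 + p*s 1)), 3*s 1, - s 0:]"
  have "coeff P 3 = - s 0" by (simp add: P_def eval_nat_numeral)
  then have Pnz: "P \<noteq> 0" using False by auto
  have sub: "{x\<in>XA. RA x x x} \<subseteq> Some ` {t. poly P t = 0}"
  proof
    fix x assume x: "x \<in> {x\<in>XA. RA x x x}"
    show "x \<in> Some ` {t. poly P t = 0}"
    proof (cases x)
      case None then show ?thesis using x False by (simp add: RA_diag cube_None)
    next
      case (Some t) then show ?thesis using x by (simp add: RA_diag cube_Some P_def)
    qed
  qed
  have "card {x\<in>XA. RA x x x} \<le> card (Some ` {t. poly P t = 0})"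
    by (rule card_mono[OF _ sub]) simp
  also have "\<dots> \<le> card {t. poly P t = 0}" by (rule card_image_le) simp
  also have "\<dots> \<le> degree P" by (rule card_poly_roots_bound[OF Pnz])
  also have "\<dots> \<le> 3" unfolding P_def by (rule deg3)
  finally show ?thesis .
next
  case True
  then have s1: "s 1 \<noteq> 0" using nz by simp
  define P where "P = [:(p*p + r)*s 1, -(3*(p*s 1)), 3*s 1:]"
  have Pnz: "P \<noteq> 0"
  proof
    assume P0: "P = 0"
    have "coeff P 2 = 3 * s 1" by (simp add: P_def eval_nat_numeral)
    then have three: "(3::'a) = 0" using P0 s1 by simp
    have "coeff P 0 = (p*p + r) * s 1" by (simp add: P_def)
    then have "p*p + r = 0" using P0 s1 by simp
    then have "gg (-p) = 3 * (p*p)" by (simp add: gg_def algebra_simps)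
    then have "gg (-p) = 0" using three by simp
    then show False using nr by blast
  qed
  have sub: "{x\<in>XA. RA x x x} \<subseteq> insert None (Some ` {t. poly P t = 0})"
  proof
    fix x assume x: "x \<in> {x\<in>XA. RA x x x}"
    show "x \<in> insert None (Some ` {t. poly P t = 0})"
    proof (cases x)
      case None then show ?thesis by simp
    next
      case (Some t) then show ?thesis using x True by (simp add: RA_diag cube_Some P_def)
    qed
  qed
  have "card {x\<in>XA. RA x x x} \<le> card (insert None (Some ` {t. poly P t = 0}))"
    by (rule card_mono[OF _ sub]) simp
  also have "\<dots> \<le> Suc (card (Some ` {t. poly P t = 0}))" by (rule card_insert_le_m1) simp_all
  also have "card (Some ` {t. poly P t = 0}) \<le> card {t. poly P t = 0}" by (rule card_image_le) simp
  also have "\<dots> \<le> degree P" by (rule card_poly_roots_bound[OF Pnz])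
  also have "\<dots> \<le> 2" unfolding P_def by (rule deg2)
  finally show ?thesis by simp
qed


lemma sq_params:
  assumes "gg a = 0"
  shows "p = a + a" "r = - (a * a)"
proof -
  have "gg (p - a) = gg a" by (simp add: gg_def algebra_simps)
  then have "gg (p - a) = 0" using assms by simp
  then have "p - a = a" using no_two_roots assms by blast
  then show pe: "p = a + a" by (simp add: algebra_simps)
  show "r = - (a * a)" using r_root[OF assms] pe by (simp add: algebra_simps)
qed

lemma XA_sq:
  assumes "gg a = 0"
  shows "XA = UNIV - {Some a}"
proof (intro set_eqI iffI)
  fix x assume "x \<in> XA"
  then show "x \<in> UNIV - {Some a}" using assms by (auto simp: XA_def Nm_rho)
next
  fix x assume x: "x \<in> UNIV - {Some a}"
  show "x \<in> XA"
  proof (cases x)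
    case None then show ?thesis by (simp add: XA_def Nm_rho)
  next
    case (Some t)
    then have "t \<noteq> a" using x by simp
    then have "gg t \<noteq> 0" using no_two_roots assms by blast
    then show ?thesis using Some by (simp add: XA_def Nm_rho)
  qed
qed

lemma cube_sq:
  assumes "gg a = 0"
  shows "Lin (mulR (mulR (rho (Some t)) (rho (Some t))) (rho (Some t))) = (a - t) * (a - t) * ((a - t) * s 0 + 3 * (s 1 - a * s 0))"
proof -
  have pe: "p = a + a" and re: "r = - (a * a)" using sq_params[OF assms] by auto
  show ?thesis unfolding Lin_def mulR_def rho_def unfolding pe re by (simp; algebra)
qed

lemma e_square:
  assumes ga: "gg a = 0"
  shows "card {x\<in>XA. RA x x x} \<le> 1 \<or> {x\<in>XA. RA x x x} = XA"
proof -
  have XA: "XA = UNIV - {Some a}" by (rule XA_sq[OF ga])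
  have k: "s 1 - a * s 0 \<noteq> 0" by (rule kappa_nz[OF ga])
  have memS: "Some t \<in> {x\<in>XA. RA x x x} \<longleftrightarrow> t \<noteq> a \<and> (a - t) * s 0 + 3 * (s 1 - a * s 0) = 0" for t
    by (auto simp: XA RA_diag cube_sq[OF ga])
  have memN: "None \<in> {x\<in>XA. RA x x x} \<longleftrightarrow> s 0 = 0"
    by (simp add: XA RA_diag cube_None)
  show ?thesis
  proof (cases "s 0 = 0")
    case False
    have "{x\<in>XA. RA x x x} \<subseteq> {Some (a + 3 * (s 1 - a * s 0) / s 0)}"
    proof
      fix x assume x: "x \<in> {x\<in>XA. RA x x x}"
      show "x \<in> {Some (a + 3 * (s 1 - a * s 0) / s 0)}"
      proof (cases x)
        case None then show ?thesis using x memN False by simp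
      next
        case (Some t)
        then have "(a - t) * s 0 + 3 * (s 1 - a * s 0) = 0" using x memS by blast
        then have "t = a + 3 * (s 1 - a * s 0) / s 0" using False by (simp add: field_simps)
        then show ?thesis using Some by simp
      qed
    qed
    then have "card {x\<in>XA. RA x x x} \<le> card {Some (a + 3 * (s 1 - a * s 0) / s 0)}"
      by (intro card_mono) simp_all
    then show ?thesis by simp
  next
    case True
    show ?thesis
    proof (cases "(3::'a) = 0")
      case False
      have "{x\<in>XA. RA x x x} \<subseteq> {None}"
      proof
        fix x assume x: "x \<in> {x\<in>XA. RA x x x}"
        show "x \<in> {None}"
        proof (cases x)
          case (Some t)
          then have "(a - t) * s 0 + 3 * (s 1 - a * s 0) = 0" using x memS by blast
          then show ?thesis using True False k by simp
        qed simp
      qed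
      then have "card {x\<in>XA. RA x x x} \<le> card {None :: 'a option}"
        by (intro card_mono) simp_all
      then show ?thesis by simp
    next
      case three: True
      have "{x\<in>XA. RA x x x} = XA"
      proof (intro set_eqI iffI)
        fix x assume "x \<in> {x\<in>XA. RA x x x}" then show "x \<in> XA" by simp
      next
        fix x assume x: "x \<in> XA"
        show "x \<in> {x\<in>XA. RA x x x}"
        proof (cases x)
          case None then show ?thesis using memN True by simp
        next
          case (Some t)
          then have "t \<noteq> a" using x XA by simp
          then show ?thesis using memS Some True three by simp
        qed
      qed
      then show ?thesis by simp
    qed
  qed
qed

lemma caseA:
  "\<exists>n e. 6 * B_count 3 V + 3*n = n*n + 2*e \<and>
     ((n = card (UNIV::'a set) + 1 \<and> e \<le> 3) \<or> (n = card (UNIV::'a set) \<and> (e \<le> 1 \<or> e = n)))"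
proof -
  have sym1: "RA x y z \<Longrightarrow> RA y x z" for x y z using RA_sym1 by blast
  have sym2: "RA x y z \<Longrightarrow> RA x z y" for x y z using RA_sym2 by blast
  have finX: "finite XA" by simp
  have cnt: "6 * card {T. T \<subseteq> XA \<and> card T = 3 \<and> (\<exists>x y z. T = {x,y,z} \<and> RA x y z)} + 3 * card XA
         = card XA * card XA + 2 * card {x\<in>XA. RA x x x}"
    by (rule count3[OF finX sym1 sym2 fnA])
  have B3: "B_count 3 V = card {T. T \<subseteq> XA \<and> card T = 3 \<and> (\<exists>x y z. T = {x,y,z} \<and> RA x y z)}"
    unfolding B3_Sup3 using Sup3_eq[of XA RA] critA by simp
  have eq: "6 * B_count 3 V + 3 * card XA = card XA * card XA + 2 * card {x\<in>XA. RA x x x}"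
    using cnt B3 by simp
  show ?thesis
  proof (cases "\<exists>a. gg a = 0")
    case True
    then obtain a where ga: "gg a = 0" by blast
    have "card XA = card (UNIV :: 'a option set) - 1" unfolding XA_sq[OF ga] by (simp add: card_Diff_subset)
    then have cX: "card XA = card (UNIV :: 'a set)" by simp
    have "card {x\<in>XA. RA x x x} \<le> 1 \<or> card {x\<in>XA. RA x x x} = card XA"
      using e_square[OF ga] by auto
    then show ?thesis using eq cX by blast
  next
    case False
    then have "\<forall>x. x \<in> XA" using notXA by blast
    then have "XA = UNIV" by auto
    then have cX: "card XA = card (UNIV :: 'a set) + 1" by simp
    have "card {x\<in>XA. RA x x x} \<le> 3" using e_irred False by blast
    then show ?thesis using eq cX by blast
  qed
qed

end

lemma conv1: "6*b + 3*q = q*q + 2 \<Longrightarrow> 6 * int b = int q^2 - 3 * int q + 2"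
proof -
  assume h: "6*b + 3*q = q*q + 2"
  have "int (6*b + 3*q) = int (q*q + 2)" using h by (simp only:)
  then show ?thesis by (simp add: power2_eq_square)
qed
lemma conv2: "6*b + q = q*q \<Longrightarrow> 6 * int b = int q^2 - int q"
proof -
  assume h: "6*b + q = q*q"
  have "int (6*b + q) = int (q*q)" using h by (simp only:)
  then show ?thesis by (simp add: power2_eq_square)
qed
lemma conv3: "6*b + q + 2 = q*q \<Longrightarrow> 6 * int b = int q^2 - int q - 2"
proof -
  assume h: "6*b + q + 2 = q*q"
  have "int (6*b + q + 2) = int (q*q)" using h by (simp only:)
  then show ?thesis by (simp add: power2_eq_square)
qed
lemma conv4: "6*b + q = q*q + 4 \<Longrightarrow> 6 * int b = int q^2 - int q + 4"
proof -
  assume h: "6*b + q = q*q + 4"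
  have "int (6*b + q) = int (q*q + 4)" using h by (simp only:)
  then show ?thesis by (simp add: power2_eq_square)
qed
lemma conv5: "6*b + 3*q = q*q \<Longrightarrow> 6 * int b = int q^2 - 3 * int q"
proof -
  assume h: "6*b + 3*q = q*q"
  have "int (6*b + 3*q) = int (q*q)" using h by (simp only:)
  then show ?thesis by (simp add: power2_eq_square)
qed

context cw3 begin

lemma B3_main:
  "\<exists>n e. 6 * B_count 3 V + 3*n = n*n + 2*e \<and>
     ((n = card (UNIV::'a set) + 1 \<and> e \<le> 3) \<or> (n = card (UNIV::'a set) \<and> (e \<le> 1 \<or> e = n)))"
proof (cases "s 0 = 0 \<and> s 1 = 0")
  case True
  then show ?thesis using caseB by blast
next
  case False
  then have nz: "s 0 \<noteq> 0 \<or> s 1 \<noteq> 0" by simp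
  define \<Delta> where "\<Delta> = s 1 * s 1 - s 0 * s 2"
  have D: "\<Delta> \<noteq> 0"
  proof
    assume D0: "\<Delta> = 0"
    have s0: "s 0 \<noteq> 0"
    proof
      assume "s 0 = 0"
      then have "s 1 * s 1 = 0" using D0 by (simp add: \<Delta>_def)
      then show False using nz \<open>s 0 = 0\<close> by simp
    qed
    define a where "a = s 1 / s 0"
    have s1: "s 1 = a * s 0" using s0 by (simp add: a_def)
    have s2: "s 2 = a * a * s 0"
    proof -
      have "s 0 * s 2 = s 1 * s 1" using D0 by (simp add: \<Delta>_def)
      also have "\<dots> = s 0 * (a * a * s 0)" using s1 by (simp add: algebra_simps)
      finally show ?thesis using s0 by simp
    qed
    have "\<forall>i<4. s i = s 0 * pc_entry i (Some a) + (s 3 - a * a * a * s 0) * pc_entry i None"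
      unfolding less4 using s1 s2 by (auto simp: pc_Some pc_None power2_eq_square power3_eq_cube)
    then show False by (rule no_small)
  qed
  define p where "p = (s 2 * s 1 - s 0 * s 3) / \<Delta>"
  define r where "r = (s 1 * s 3 - s 2 * s 2) / \<Delta>"
  have e2: "s 2 = p * s 1 + r * s 0"
  proof -
    have "p * s 1 + r * s 0 = (s 2 * (s 1 * s 1 - s 0 * s 2)) / \<Delta>"
      unfolding p_def r_def by (simp add: add_divide_distrib[symmetric] algebra_simps)
    also have "\<dots> = s 2" using D by (simp add: \<Delta>_def)
    finally show ?thesis by simp
  qed
  have e3: "s 3 = p * (p * s 1 + r * s 0) + r * s 1"
  proof -
    have "p * s 2 + r * s 1 = (s 3 * (s 1 * s 1 - s 0 * s 2)) / \<Delta>"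
      unfolding p_def r_def by (simp add: add_divide_distrib[symmetric] algebra_simps)
    also have "\<dots> = s 3" using D by (simp add: \<Delta>_def)
    finally show ?thesis using e2 by simp
  qed
  interpret A: cwA v p r
    by (unfold_locales) (use e2 e3 nz in simp_all)
  show ?thesis by (rule A.caseA)
qed

lemma A4_zero: "A_count 4 C0 = 0"
proof -
  have "{c\<in>C0. hweight c = 4} = {}"
  proof (rule ccontr)
    assume "{c\<in>C0. hweight c = 4} \<noteq> {}"
    then obtain c where c: "c \<in> C0" "hweight c = 4" by blast
    have "c = (\<lambda>_. 0)" using Kle4[OF q3, of "supp c" c] c by (simp add: hweight_supp arc_eq)
    then show False using c(2) by (simp add: hweight_supp supp_def)
  qed
  then show ?thesis by (simp add: A_count_def)
qed

lemma B_small: "k < 3 \<Longrightarrow> B_count k V = 0"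
proof -
  assume k: "k < 3"
  have "{x\<in>V. hweight x = k} = {}" using wge3 k by fastforce
  then show ?thesis by (simp add: B_count_def)
qed

end

theorem theorem4p4:
  fixes v :: "'a::{field,finite} option \<Rightarrow> 'a"
  defines "q \<equiv> card (UNIV :: 'a set)"
  defines "V \<equiv> coset_of v"
  assumes "q \<ge> 5"
    and "coset_weight V = 3"
  shows "B_count 0 V = 0 \<and> B_count 1 V = 0 \<and> B_count 2 V = 0
    \<and> (q mod 3 = 1 \<longrightarrow> 6 * int (B_count 3 V) \<in> {int q^2 - 3 * int q + 2, int q^2 - int q})
    \<and> (q mod 3 = 2 \<longrightarrow> 6 * int (B_count 3 V) \<in>
          {int q^2 - 3 * int q + 2, int q^2 - int q - 2, int q^2 - int q + 4})
    \<and> (q mod 3 = 0 \<longrightarrow> 6 * int (B_count 3 V) \<in> {int q^2 - 3 * int q, int q^2 - int q})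
    \<and> int (B_count 4 V) = int ((q + 1) choose 4) - (int q - 2) * int (B_count 3 V)
    \<and> (\<forall>w\<ge>5. int (B_count w V) = int (A_count w (arc_code :: ('a option \<Rightarrow> 'a) set))
          + (-1) ^ w * (int ((q + 1) choose w) * int ((w - 1) choose 3)
                        - int ((q - 2) choose (w - 3)) * int (B_count 3 V)))"
proof -
  interpret cw3 v
    by unfold_locales (use assms(3,4) in \<open>simp_all add: q_def V_def\<close>)
  have B012: "B_count 0 V = 0" "B_count 1 V = 0" "B_count 2 V = 0"
    unfolding V_def by (simp_all add: B_small)
  obtain n e where ne: "6 * B_count 3 V + 3*n = n*n + 2*e"
     "(n = q + 1 \<and> e \<le> 3) \<or> (n = q \<and> (e \<le> 1 \<or> e = n))"
    using B3_main unfolding V_def q_def by blast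
  note ac = arith_core[OF ne(1) ne(2)]
  have r1: "q mod 3 = 1 \<longrightarrow> 6 * int (B_count 3 V) \<in> {int q^2 - 3 * int q + 2, int q^2 - int q}"
    using ac conv1 conv2 by blast
  have r2: "q mod 3 = 2 \<longrightarrow> 6 * int (B_count 3 V) \<in>
          {int q^2 - 3 * int q + 2, int q^2 - int q - 2, int q^2 - int q + 4}"
    using ac conv1 conv3 conv4 by blast
  have r0: "q mod 3 = 0 \<longrightarrow> 6 * int (B_count 3 V) \<in> {int q^2 - 3 * int q, int q^2 - int q}"
  proof
    assume q0: "q mod 3 = 0"
    have "6 * B_count 3 V + 3 * q = q * q \<or> 6 * B_count 3 V + q = q * q" using ac q0 by simp
    then show "6 * int (B_count 3 V) \<in> {int q^2 - 3 * int q, int q^2 - int q}"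
    proof
      assume h: "6 * B_count 3 V + 3 * q = q * q"
      show ?thesis using conv5[OF h] by simp
    next
      assume h: "6 * B_count 3 V + q = q * q"
      show ?thesis using conv2[OF h] by simp
    qed
  qed
  have B4: "int (B_count 4 V) = int ((q + 1) choose 4) - (int q - 2) * int (B_count 3 V)"
  proof -
    have "int (B_count 4 V) = int (A_count 4 C0) + (-1) ^ 4 * (int ((q + 1) choose 4) * int ((4 - 1) choose 3)
                   - int ((q - 2) choose (4 - 3)) * int (B_count 3 V))"
      using Bw[of 4] unfolding V_def q_def by simp
    also have "\<dots> = int ((q + 1) choose 4) - int (q - 2) * int (B_count 3 V)"
      using A4_zero by simp
    also have "int (q - 2) = int q - 2" using assms(3) by simp
    finally show ?thesis .
  qed
  have Bw5: "\<forall>w\<ge>5. int (B_count w V) = int (A_count w (arc_code :: ('a option \<Rightarrow> 'a) set))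
          + (-1) ^ w * (int ((q + 1) choose w) * int ((w - 1) choose 3)
                        - int ((q - 2) choose (w - 3)) * int (B_count 3 V))"
    using Bw unfolding V_def q_def by simp
  show ?thesis using B012 r1 r2 r0 B4 Bw5 by blast
qed


end
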